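(* Let $ABC$ be a triangle with circumcircle $\Omega$, let $P$ be a point with isogonal conjugate $P'$ with respect to $ABC$, and let $D$ be the intersection of $\Omega$ with the conic $(ABCPP')$ other than $A,B,C$. Let $X$ be the second intersection of line $DP$ with $\Omega$ and $Y$ the second intersection of line $DP'$ with $\Omega$. Let the circle $(PXY)$ meet line $PP'$ again at $Z$, and let $\mathcal C_1$ denote the conic $(ABCPX)$. Let $X_1, X_2$ vary on $\mathcal C_1$ such that $P, X, X_1, X_2$ are concyclic. (a) $X_1X_2 \parallel PZ$. (b) If lines $XX_1, XX_2$ meet $\Omega$ again at $X_1', X_2'$ respectively, then $P', X_1', X_2'$ are collinear.
   Context: For points $X,Y,Z$, $(XYZ)$ denotes the circle through them; for five points $V,W,X,Y,Z$, $(VWXYZ)$ denotes the conic through them. *)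

theory Defs
  imports "HOL-Analysis.Analysis"
begin

definition line :: "complex \<Rightarrow> complex \<Rightarrow> complex set" where
  "line U V = {U + of_real t * (V - U) | t. True}"

definition is_circle :: "complex set \<Rightarrow> bool" where
  "is_circle S \<longleftrightarrow> (\<exists>c r. r > 0 \<and> S = {z. cmod (z - c) = r})"

definition concyclic :: "complex set \<Rightarrow> bool" where
  "concyclic S \<longleftrightarrow> (\<exists>\<Gamma>. is_circle \<Gamma> \<and> S \<subseteq> \<Gamma>)"

definition is_conic :: "complex set \<Rightarrow> bool" where
  "is_conic S \<longleftrightarrow> (\<exists>a b c d e f :: real. (a, b, c) \<noteq> (0, 0, 0) \<and>
     S = {z. a * Re z ^ 2 + b * Re z * Im z + c * Im z ^ 2 + d * Re z + e * Im z + f = 0})"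

definition parallel_lines :: "complex set \<Rightarrow> complex set \<Rightarrow> bool" where
  "parallel_lines L M \<longleftrightarrow> L = M \<or> L \<inter> M = {}"

text \<open>Reflection of the point z in the line through A with direction u (u nonzero).\<close>
definition reflect :: "complex \<Rightarrow> complex \<Rightarrow> complex \<Rightarrow> complex" where
  "reflect A u z = A + (u / cnj u) * cnj (z - A)"

definition bisector_dir :: "complex \<Rightarrow> complex \<Rightarrow> complex \<Rightarrow> complex" where
  "bisector_dir A B C = (B - A) / of_real (cmod (B - A)) + (C - A) / of_real (cmod (C - A))"

definition isogonal_line :: "complex \<Rightarrow> complex \<Rightarrow> complex \<Rightarrow> complex \<Rightarrow> complex set" where
  "isogonal_line A B C P = line A (reflect A (bisector_dir A B C) P)"

definition isogonal_conjugate :: "complex \<Rightarrow> complex \<Rightarrow> complex \<Rightarrow> complex \<Rightarrow> complex \<Rightarrow> bool" where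
  "isogonal_conjugate A B C P P' \<longleftrightarrow>
     P' \<in> isogonal_line A B C P \<and> P' \<in> isogonal_line B C A P \<and> P' \<in> isogonal_line C A B P"

end

theory Submission
  imports Defs
begin


definition Fc :: "complex \<Rightarrow> real \<Rightarrow> complex \<Rightarrow> real \<Rightarrow> complex \<Rightarrow> real" where
  "Fc \<alpha> \<beta> \<gamma> \<delta> z = Re (\<alpha> * z^2) + \<beta> * (cmod z)^2 + Re (\<gamma> * z) + \<delta>"

lemma Re_c: "complex_of_real (Re w) = (w + cnj w) / 2"
  by (simp add: complex_add_cnj)

lemma cmod_sq_c: "complex_of_real ((cmod z)^2) = z * cnj z"
  by (rule complex_norm_square)

lemma Fc_c: "complex_of_real (Fc \<alpha> \<beta> \<gamma> \<delta> z) =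
   (\<alpha> * z^2 + cnj \<alpha> * (cnj z)^2 + 2 * \<beta> * z * cnj z + \<gamma> * z + cnj \<gamma> * cnj z + 2 * \<delta>) / 2"
  unfolding Fc_def of_real_add of_real_mult Re_c cmod_sq_c
  by (simp add: field_simps)

lemma conic_Fc: "is_conic S \<longleftrightarrow> (\<exists>\<alpha> \<beta> \<gamma> \<delta>. (\<alpha> \<noteq> 0 \<or> \<beta> \<noteq> 0) \<and> S = {z. Fc \<alpha> \<beta> \<gamma> \<delta> z = 0})"
proof
  assume "is_conic S"
  then obtain a b c d e f :: real where abc: "(a, b, c) \<noteq> (0, 0, 0)" and
    S: "S = {z. a * Re z ^ 2 + b * Re z * Im z + c * Im z ^ 2 + d * Re z + e * Im z + f = 0}"
    unfolding is_conic_def by blast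
  define \<alpha> where "\<alpha> = Complex ((a - c)/2) (-b/2)"
  have eq: "Fc \<alpha> ((a+c)/2) (Complex d (-e)) f z = a * Re z ^ 2 + b * Re z * Im z + c * Im z ^ 2 + d * Re z + e * Im z + f" for z
    unfolding Fc_def \<alpha>_def cmod_power2 by (simp add: power2_eq_square field_simps)
  have "\<alpha> \<noteq> 0 \<or> (a+c)/2 \<noteq> 0" using abc unfolding \<alpha>_def complex_eq_iff by auto
  then show "\<exists>\<alpha> \<beta> \<gamma> \<delta>. (\<alpha> \<noteq> 0 \<or> \<beta> \<noteq> 0) \<and> S = {z. Fc \<alpha> \<beta> \<gamma> \<delta> z = 0}"
    using eq S by (intro exI[of _ \<alpha>] exI[of _ "(a+c)/2"] exI[of _ "Complex d (-e)"] exI[of _ f]) auto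
next
  assume "\<exists>\<alpha> \<beta> \<gamma> \<delta>. (\<alpha> \<noteq> 0 \<or> \<beta> \<noteq> 0) \<and> S = {z. Fc \<alpha> \<beta> \<gamma> \<delta> z = 0}"
  then obtain \<alpha> \<beta> \<gamma> \<delta> where ab: "\<alpha> \<noteq> 0 \<or> \<beta> \<noteq> 0" and S: "S = {z. Fc \<alpha> \<beta> \<gamma> \<delta> z = 0}" by blast
  have eq: "Fc \<alpha> \<beta> \<gamma> \<delta> z = (Re \<alpha> + \<beta>) * Re z ^ 2 + (-2 * Im \<alpha>) * Re z * Im z + (\<beta> - Re \<alpha>) * Im z ^ 2
     + Re \<gamma> * Re z + (- Im \<gamma>) * Im z + \<delta>" for z
    unfolding Fc_def cmod_power2 by (simp add: power2_eq_square algebra_simps)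
  have "(Re \<alpha> + \<beta>, -2 * Im \<alpha>, \<beta> - Re \<alpha>) \<noteq> (0,0,0)" using ab by (auto simp: complex_eq_iff)
  then show "is_conic S" unfolding is_conic_def S eq by blast
qed

lemma div_helper: fixes w e ce r :: complex assumes "w * ce = r" "e * ce \<noteq> 0"
  shows "w = r / (e * ce) * e"
  using assms by (auto simp: field_simps)

lemma div_helper2: fixes a b c :: complex assumes "c \<noteq> 0" shows "a / b = (a * c) / (b * c)"
  using assms by simp

lemma line_iff: "z \<in> line U V \<longleftrightarrow> (\<exists>t::real. z = U + t * (V - U))"
  unfolding line_def by auto

lemma line_Im: assumes "U \<noteq> V" shows "z \<in> line U V \<longleftrightarrow> Im ((z - U) * cnj (V - U)) = 0"
proof
  assume "z \<in> line U V"
  then obtain t::real where "z = U + t * (V - U)" by (auto simp: line_iff)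
  then have "(z - U) * cnj (V - U) = complex_of_real t * ((V - U) * cnj (V - U))"
    by simp
  also have "\<dots> = complex_of_real (t * (cmod (V - U))^2)" unfolding of_real_mult cmod_sq_c ..
  finally have "(z - U) * cnj (V - U) = complex_of_real (t * (cmod (V - U))^2)" .
  then show "Im ((z - U) * cnj (V - U)) = 0" by (metis Im_complex_of_real)
next
  assume h: "Im ((z - U) * cnj (V - U)) = 0"
  define r where "r = Re ((z - U) * cnj (V - U))"
  have r: "(z - U) * cnj (V - U) = complex_of_real r" using h unfolding r_def by (simp add: complex_eq_iff)
  have n: "(V - U) * cnj (V - U) \<noteq> 0" using assms by simp
  have "z - U = complex_of_real (r / (cmod (V - U))^2) * (V - U)"
    using div_helper[OF r n] unfolding of_real_divide cmod_sq_c .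
  then show "z \<in> line U V" unfolding line_iff by (metis add_diff_cancel_left' diff_add_cancel)
qed

lemma collinear_Im: "collinear {U, V, W} \<longleftrightarrow> Im ((V - U) * cnj (W - U)) = 0"
proof -
  have "collinear {U, V, W} = collinear {V, U, W}" by (simp add: insert_commute)
  also have "\<dots> = collinear {0, V - U, W - U}" by (subst collinear_3) auto
  also have "\<dots> = ((W - U) / (V - U) \<in> \<real>)" by (rule collinear_iff_Reals)
  also have "\<dots> = (Im ((V - U) * cnj (W - U)) = 0)"
  proof (cases "V = U")
    case True then show ?thesis by simp
  next
    case False
    have n: "(V - U) * cnj (V - U) \<noteq> 0" using False by simp
    have "(W - U) / (V - U) = ((W - U) * cnj (V - U)) / ((V - U) * cnj (V - U))"
      using False by (intro div_helper2) simp
    also have "\<dots> = cnj ((V - U) * cnj (W - U)) / complex_of_real ((cmod (V - U))^2)"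
      unfolding cmod_sq_c by simp
    finally have "(W - U) / (V - U) = cnj ((V - U) * cnj (W - U)) / complex_of_real ((cmod (V - U))^2)" .
    then have "Im ((W - U) / (V - U)) = - Im ((V - U) * cnj (W - U)) / (cmod (V - U))^2"
      by (simp add: Im_divide_of_real algebra_simps)
    then show ?thesis using False by (simp add: complex_is_Real_iff) argo
  qed
  finally show ?thesis .
qed


lemma Fc_affine: "Fc \<alpha> \<beta> \<gamma> \<delta> (w0 + m * t) =
   Fc (\<alpha> * m^2) (\<beta> * (cmod m)^2) (2 * \<alpha> * w0 * m + 2 * complex_of_real \<beta> * cnj w0 * m + \<gamma> * m) (Fc \<alpha> \<beta> \<gamma> \<delta> w0) t"
proof -
  have "complex_of_real (Fc \<alpha> \<beta> \<gamma> \<delta> (w0 + m * t)) = complex_of_real (Fc (\<alpha> * m^2) (\<beta> * (cmod m)^2) (2 * \<alpha> * w0 * m + 2 * complex_of_real \<beta> * cnj w0 * m + \<gamma> * m) (Fc \<alpha> \<beta> \<gamma> \<delta> w0) t)"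
    unfolding Fc_c of_real_mult cmod_sq_c complex_cnj_add complex_cnj_mult complex_cnj_power complex_cnj_cnj
      complex_cnj_complex_of_real complex_cnj_numeral
    apply (rule sym)
    apply (simp add: field_simps)
    apply (simp only: power2_eq_square)
    apply (simp add: algebra_simps del: complex_cnj_mult)
    done
  then show ?thesis by (simp only: of_real_eq_iff)
qed

lemma unit_cnj: assumes "cmod t = 1" shows "cnj t = 1 / t"
proof -
  have "t * cnj t = 1" using cmod_sq_c[of t] assms by simp
  then show ?thesis by (metis mult_zero_left nonzero_eq_divide_eq zero_neq_one mult.commute)
qed

lemma cubic_zero:
  fixes d0 d1 d2 d3 t1 t2 t3 t4 :: complex
  assumes d: "t1 \<noteq> t2" "t1 \<noteq> t3" "t1 \<noteq> t4" "t2 \<noteq> t3" "t2 \<noteq> t4" "t3 \<noteq> t4"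
    and g1: "d3*t1^3 + d2*t1^2 + d1*t1 + d0 = 0"
    and g2: "d3*t2^3 + d2*t2^2 + d1*t2 + d0 = 0"
    and g3: "d3*t3^3 + d2*t3^2 + d1*t3 + d0 = 0"
    and g4: "d3*t4^3 + d2*t4^2 + d1*t4 + d0 = 0"
  shows "d3 = 0 \<and> d2 = 0 \<and> d1 = 0 \<and> d0 = 0"
proof -
  have i: "(d3*x^3 + d2*x^2 + d1*x + d0) - (d3*y^3 + d2*y^2 + d1*y + d0)
      = (x - y) * (d3*(x^2+x*y+y^2) + d2*(x+y) + d1)" for x y :: complex
    by (simp add: algebra_simps power2_eq_square power3_eq_cube)
  have e12: "d3*(t1^2+t1*t2+t2^2) + d2*(t1+t2) + d1 = 0" using i[of t1 t2] g1 g2 d by simp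
  have e13: "d3*(t1^2+t1*t3+t3^2) + d2*(t1+t3) + d1 = 0" using i[of t1 t3] g1 g3 d by simp
  have e14: "d3*(t1^2+t1*t4+t4^2) + d2*(t1+t4) + d1 = 0" using i[of t1 t4] g1 g4 d by simp
  have j: "(d3*(x^2+x*y+y^2) + d2*(x+y) + d1) - (d3*(x^2+x*z+z^2) + d2*(x+z) + d1)
     = (y - z) * (d3*(x+y+z) + d2)" for x y z :: complex
    by (simp add: algebra_simps power2_eq_square)
  have e123: "d3*(t1+t2+t3) + d2 = 0" using j[of t1 t2 t3] e12 e13 d by simp
  have e124: "d3*(t1+t2+t4) + d2 = 0" using j[of t1 t2 t4] e12 e14 d by simp
  have "(d3*(t1+t2+t3) + d2) - (d3*(t1+t2+t4) + d2) = (t3 - t4) * d3" by (simp add: algebra_simps)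
  then have "d3 = 0" using e123 e124 d by simp
  moreover then have "d2 = 0" using e123 by simp
  moreover then have "d1 = 0" using e12 \<open>d3 = 0\<close> by simp
  moreover then have "d0 = 0" using g1 \<open>d3 = 0\<close> \<open>d2 = 0\<close> by simp
  ultimately show ?thesis by simp
qed


lemma vieta_unit:
  assumes u: "cmod t1 = 1" "cmod t2 = 1" "cmod t3 = 1" "cmod t4 = 1"
    and d: "t1 \<noteq> t2" "t1 \<noteq> t3" "t1 \<noteq> t4" "t2 \<noteq> t3" "t2 \<noteq> t4" "t3 \<noteq> t4"
    and F: "Fc \<alpha> \<beta> \<gamma> \<delta> t1 = 0" "Fc \<alpha> \<beta> \<gamma> \<delta> t2 = 0" "Fc \<alpha> \<beta> \<gamma> \<delta> t3 = 0" "Fc \<alpha> \<beta> \<gamma> \<delta> t4 = 0"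
  shows "cnj \<alpha> = \<alpha> * (t1*t2*t3*t4)" "\<gamma> = - \<alpha> * (t1+t2+t3+t4)"
    "2 * complex_of_real (\<beta> + \<delta>) = \<alpha> * (t1*t2+t1*t3+t1*t4+t2*t3+t2*t4+t3*t4)"
    "cnj \<gamma> = - \<alpha> * (t1*t2*t3+t1*t2*t4+t1*t3*t4+t2*t3*t4)"
proof -
  have q: "\<alpha>*t^4 + \<gamma>*t^3 + 2*complex_of_real (\<beta>+\<delta>)*t^2 + cnj \<gamma>*t + cnj \<alpha> = 0"
    if ht: "cmod t = 1" "Fc \<alpha> \<beta> \<gamma> \<delta> t = 0" for t
  proof -
    have ct: "cnj t = 1 / t" using unit_cnj[OF ht(1)] .
    have t0: "t \<noteq> 0" using ht(1) by auto
    have "complex_of_real (Fc \<alpha> \<beta> \<gamma> \<delta> t) = (\<alpha> * t^2 + cnj \<alpha> * (1/t)^2 + 2*complex_of_real \<beta>*t*(1/t) + \<gamma>*t + cnj \<gamma>*(1/t) + 2*complex_of_real \<delta>)/2"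
      by (simp only: Fc_c ct)
    then have "0 = (\<alpha> * t^2 + cnj \<alpha> * (1/t)^2 + 2*complex_of_real \<beta>*t*(1/t) + \<gamma>*t + cnj \<gamma>*(1/t) + 2*complex_of_real \<delta>)/2"
      using ht(2) by simp
    then have "0 = (\<alpha> * t^2 + cnj \<alpha> * (1/t)^2 + 2*complex_of_real \<beta>*t*(1/t) + \<gamma>*t + cnj \<gamma>*(1/t) + 2*complex_of_real \<delta>)/2 * (2 * t^2)"
      by simp
    also have "\<dots> = \<alpha>*t^4 + \<gamma>*t^3 + 2*complex_of_real (\<beta>+\<delta>)*t^2 + cnj \<gamma>*t + cnj \<alpha>"
      using t0 by (simp add: field_simps power2_eq_square power3_eq_cube power4_eq_xxxx del: complex_cnj_mult)
    finally show ?thesis by simp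
  qed
  define d3 where "d3 = \<gamma> + \<alpha> * (t1+t2+t3+t4)"
  define d2 where "d2 = 2 * complex_of_real (\<beta> + \<delta>) - \<alpha> * (t1*t2+t1*t3+t1*t4+t2*t3+t2*t4+t3*t4)"
  define d1 where "d1 = cnj \<gamma> + \<alpha> * (t1*t2*t3+t1*t2*t4+t1*t3*t4+t2*t3*t4)"
  define d0 where "d0 = cnj \<alpha> - \<alpha> * (t1*t2*t3*t4)"
  have gen: "\<alpha>*t^4 + \<gamma>*t^3 + 2*complex_of_real (\<beta>+\<delta>)*t^2 + cnj \<gamma>*t + cnj \<alpha>
     = \<alpha> * ((t-t1)*(t-t2)*(t-t3)*(t-t4)) + (d3*t^3 + d2*t^2 + d1*t + d0)" for t
    unfolding d3_def d2_def d1_def d0_def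
    by (simp add: algebra_simps power2_eq_square power3_eq_cube power4_eq_xxxx del: complex_cnj_mult)
  have z: "d3*t^3 + d2*t^2 + d1*t + d0 = 0" if "t \<in> {t1,t2,t3,t4}" "cmod t = 1" "Fc \<alpha> \<beta> \<gamma> \<delta> t = 0" for t
  proof -
    have p0: "(t-t1)*(t-t2)*(t-t3)*(t-t4) = 0" using that(1) by auto
    have "0 = \<alpha> * ((t-t1)*(t-t2)*(t-t3)*(t-t4)) + (d3*t^3 + d2*t^2 + d1*t + d0)"
      using gen[of t] q[OF that(2,3)] by simp
    then show ?thesis unfolding p0 by simp
  qed
  have "d3 = 0 \<and> d2 = 0 \<and> d1 = 0 \<and> d0 = 0"
    by (rule cubic_zero[OF d z[OF _ u(1) F(1)] z[OF _ u(2) F(2)] z[OF _ u(3) F(3)] z[OF _ u(4) F(4)]]) auto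
  then show "cnj \<alpha> = \<alpha> * (t1*t2*t3*t4)" "\<gamma> = - \<alpha> * (t1+t2+t3+t4)"
    "2 * complex_of_real (\<beta> + \<delta>) = \<alpha> * (t1*t2+t1*t3+t1*t4+t2*t3+t2*t4+t3*t4)"
    "cnj \<gamma> = - \<alpha> * (t1*t2*t3+t1*t2*t4+t1*t3*t4+t2*t3*t4)"
    unfolding d3_def d2_def d1_def d0_def by (simp_all add: algebra_simps eq_neg_iff_add_eq_0 del: complex_cnj_mult)
qed


lemma Im_shift: "Im ((Y - U) * c) = 0 \<Longrightarrow> Im ((z - U) * c) = Im ((z - Y) * c)"
  by (simp add: algebra_simps)

lemma parallel_dir:
  assumes UV: "U \<noteq> V" and UV': "U' \<noteq> V'" and par: "Im ((V - U) * cnj (V' - U')) = 0"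
  shows "parallel_lines (line U V) (line U' V')"
  unfolding parallel_lines_def
proof (cases "line U V \<inter> line U' V' = {}")
  case False
  then obtain Y where Y: "Y \<in> line U V" "Y \<in> line U' V'" by blast
  define e where "e = V - U"
  define e' where "e' = V' - U'"
  have e0: "e \<noteq> 0" "e' \<noteq> 0" using UV UV' unfolding e_def e'_def by auto
  define \<rho> where "\<rho> = Re (e * cnj e')"
  have r: "e * cnj e' = complex_of_real \<rho>" using par unfolding \<rho>_def e_def e'_def by (simp add: complex_eq_iff)
  define lam where "lam = \<rho> / (cmod e')^2"
  have ce: "cnj e = complex_of_real lam * cnj e'"
  proof -
    have "cnj e * e' = complex_of_real \<rho>" using arg_cong[OF r, of cnj] by simp
    moreover have "e' * cnj e' = complex_of_real ((cmod e')^2)" by (simp only: cmod_sq_c)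
    ultimately show ?thesis unfolding lam_def of_real_divide using e0
      by (simp add: field_simps) (metis mult.commute mult.left_commute)
  qed
  have l0: "lam \<noteq> 0" using ce e0 by auto
  have key: "Im (w * cnj e) = lam * Im (w * cnj e')" for w
    unfolding ce by (simp add: algebra_simps)
  have Y1: "Im ((Y - U) * cnj e) = 0" using Y(1) line_Im[OF UV] unfolding e_def by simp
  have Y2: "Im ((Y - U') * cnj e') = 0" using Y(2) line_Im[OF UV'] unfolding e'_def by simp
  have "z \<in> line U V \<longleftrightarrow> z \<in> line U' V'" for z
  proof -
    have "z \<in> line U V \<longleftrightarrow> Im ((z - U) * cnj e) = 0" using line_Im[OF UV] unfolding e_def by simp
    also have "\<dots> \<longleftrightarrow> Im ((z - Y) * cnj e) = 0" using Im_shift[OF Y1] by simp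
    also have "\<dots> \<longleftrightarrow> Im ((z - Y) * cnj e') = 0" using l0 by (simp only: key mult_eq_0_iff simp_thms)
    also have "\<dots> \<longleftrightarrow> Im ((z - U') * cnj e') = 0" using Im_shift[OF Y2] by simp
    also have "\<dots> \<longleftrightarrow> z \<in> line U' V'" using line_Im[OF UV'] unfolding e'_def by simp
    finally show ?thesis .
  qed
  then show "line U V = line U' V' \<or> line U V \<inter> line U' V' = {}" by blast
qed simp

lemma real_cnj: "Im z = 0 \<Longrightarrow> cnj z = z" by (simp add: complex_eq_iff)

lemma cnj_circ: assumes "cmod x = r" "x \<noteq> 0" shows "cnj x = complex_of_real (r^2) / x"
proof -
  have "x * cnj x = complex_of_real (r^2)" using cmod_sq_c[of x] assms(1) by simp
  then show ?thesis using assms(2) by (simp add: field_simps)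
qed

lemma circ_alg:
  fixes u v w \<rho> :: complex
  assumes "u \<noteq> 0" "v \<noteq> 0" "w \<noteq> 0" "\<rho> \<noteq> 0" "u \<noteq> v" "u \<noteq> w" "v \<noteq> w"
    and "(v - u) * (\<rho>/w - \<rho>/u) = (\<rho>/v - \<rho>/u) * (w - u)"
  shows False
proof -
  have i: "(v - u) * (\<rho>/w - \<rho>/u) - (\<rho>/v - \<rho>/u) * (w - u) = (v - u) * (u - w) * (v - w) * \<rho> / (u * v * w)"
    using assms(1-3) by (simp add: field_simps)
  have "(v - u) * (u - w) * (v - w) * \<rho> / (u * v * w) = 0" using i assms(8) by simp
  then show False using assms by simp
qed

lemma circle_noncol:
  assumes "cmod (U - c) = r" "cmod (V - c) = r" "cmod (W - c) = r" "U \<noteq> V" "U \<noteq> W" "V \<noteq> W"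
  shows "\<not> collinear {U, V, W}"
proof
  assume col: "collinear {U, V, W}"
  define u where "u = U - c"
  define v where "v = V - c"
  define w where "w = W - c"
  define \<rho> where "\<rho> = complex_of_real (r^2)"
  have r0: "r \<noteq> 0" using assms by auto
  have \<rho>0: "\<rho> \<noteq> 0" using r0 unfolding \<rho>_def by simp
  have nz: "u \<noteq> 0" "v \<noteq> 0" "w \<noteq> 0" using assms r0 unfolding u_def v_def w_def by auto
  have cu: "cnj u = \<rho> / u" "cnj v = \<rho> / v" "cnj w = \<rho> / w"
    using cnj_circ[of u r] cnj_circ[of v r] cnj_circ[of w r] nz assms unfolding u_def v_def w_def \<rho>_def by auto
  have d: "u \<noteq> v" "u \<noteq> w" "v \<noteq> w" using assms unfolding u_def v_def w_def by auto
  have "Im ((v - u) * cnj (w - u)) = 0" using col unfolding collinear_Im u_def v_def w_def by simp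
  then have "(v - u) * cnj (w - u) = cnj ((v - u) * cnj (w - u))" by (rule real_cnj[symmetric])
  also have "\<dots> = cnj (v - u) * (w - u)" by (simp only: complex_cnj_mult complex_cnj_cnj)
  finally have "(v - u) * (\<rho>/w - \<rho>/u) = (\<rho>/v - \<rho>/u) * (w - u)" by (simp only: complex_cnj_diff cu)
  then show False using circ_alg nz d \<rho>0 by blast
qed

lemma iso_cond:
  assumes nc: "\<not> collinear {A, B, C}" and iP: "P' \<in> isogonal_line A B C P"
  shows "Im ((P' - A) * (P - A) * cnj (B - A) * cnj (C - A)) = 0"
proof -
  have BA: "B \<noteq> A" and CA: "C \<noteq> A" using nc by (auto simp: collinear_Im)
  define e1 where "e1 = (B - A) / complex_of_real (cmod (B - A))"
  define e2 where "e2 = (C - A) / complex_of_real (cmod (C - A))"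
  have n1: "cmod e1 = 1" "cmod e2 = 1" using BA CA unfolding e1_def e2_def by (simp_all add: norm_divide)
  have c1: "cnj e1 = 1 / e1" "cnj e2 = 1 / e2" using unit_cnj n1 by auto
  have e10: "e1 \<noteq> 0" "e2 \<noteq> 0" using n1 by auto
  have u0: "e1 + e2 \<noteq> 0"
  proof
    assume "e1 + e2 = 0"
    then have k: "C - A = complex_of_real (- cmod (C - A) / cmod (B - A)) * (B - A)"
      using BA CA unfolding e1_def e2_def by (simp add: field_simps)
    have "(B - A) * cnj (C - A) = complex_of_real (- cmod (C - A) / cmod (B - A)) * ((B - A) * cnj (B - A))"
      by (subst k) simp
    also have "\<dots> = complex_of_real (- cmod (C - A) / cmod (B - A) * (cmod (B - A))^2)"
      by (simp only: of_real_mult cmod_sq_c)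
    finally have "Im ((B - A) * cnj (C - A)) = 0" by (metis Im_complex_of_real)
    then show False using nc collinear_Im by blast
  qed
  have bd: "bisector_dir A B C = e1 + e2" unfolding bisector_dir_def e1_def e2_def ..
  have ratio: "bisector_dir A B C / cnj (bisector_dir A B C) = e1 * e2"
    unfolding bd complex_cnj_add c1 using e10 u0 by (simp add: field_simps)
  have "P' \<in> line A (reflect A (bisector_dir A B C) P)" using iP unfolding isogonal_line_def .
  then obtain t :: real where t: "P' = A + t * (reflect A (bisector_dir A B C) P - A)" unfolding line_iff by blast
  have eq: "P' - A = t * (e1 * e2 * cnj (P - A))" using t unfolding reflect_def ratio by simp
  have "(P' - A) * (P - A) * cnj (B - A) * cnj (C - A) =
     t * (e1 * e2 * cnj (P - A)) * (P - A) * cnj (B - A) * cnj (C - A)" by (simp only: eq)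
  also have "\<dots> = t * ((P - A) * cnj (P - A)) * (e1 * cnj (B - A)) * (e2 * cnj (C - A))" by (simp only: mult_ac)
  also have "e1 * cnj (B - A) = complex_of_real (cmod (B - A))"
  proof -
    have "e1 * cnj (B - A) = ((B - A) * cnj (B - A)) / complex_of_real (cmod (B - A))" unfolding e1_def by simp
    also have "\<dots> = complex_of_real ((cmod (B - A))^2) / complex_of_real (cmod (B - A))" by (simp only: cmod_sq_c)
    also have "\<dots> = complex_of_real (cmod (B - A))" using BA by (simp add: power2_eq_square)
    finally show ?thesis .
  qed
  also have "e2 * cnj (C - A) = complex_of_real (cmod (C - A))"
  proof -
    have "e2 * cnj (C - A) = ((C - A) * cnj (C - A)) / complex_of_real (cmod (C - A))" unfolding e2_def by simp
    also have "\<dots> = complex_of_real ((cmod (C - A))^2) / complex_of_real (cmod (C - A))" by (simp only: cmod_sq_c)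
    also have "\<dots> = complex_of_real (cmod (C - A))" using CA by (simp add: power2_eq_square)
    finally show ?thesis .
  qed
  also have "(P - A) * cnj (P - A) = complex_of_real ((cmod (P - A))^2)" by (simp only: cmod_sq_c)
  finally show ?thesis by (metis Im_complex_of_real of_real_mult)
qed


lemma cross_zero:
  fixes A B C x1 x2 x3 y1 y2 y3 :: real
  assumes "A \<noteq> 0 \<or> B \<noteq> 0" "A*x1 + B*y1 + C = 0" "A*x2 + B*y2 + C = 0" "A*x3 + B*y3 + C = 0"
  shows "(y2-y1)*(x3-x1) - (x2-x1)*(y3-y1) = 0"
proof -
  have a: "A*((y2-y1)*(x3-x1) - (x2-x1)*(y3-y1)) = (y2-y1)*((A*x3 + B*y3 + C) - (A*x1 + B*y1 + C)) - ((A*x2+B*y2+C) - (A*x1+B*y1+C))*(y3-y1)"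
    by (simp add: algebra_simps)
  have b: "B*((y2-y1)*(x3-x1) - (x2-x1)*(y3-y1)) = ((A*x2 + B*y2 + C) - (A*x1+B*y1+C))*(x3 - x1) - ((A*x3+B*y3+C) - (A*x1 + B*y1 + C))*(x2 - x1)"
    by (simp add: algebra_simps)
  show ?thesis using a b assms by auto
qed

lemma conic_line:
  assumes ab: "\<alpha> \<noteq> 0 \<or> \<beta> \<noteq> 0" and e: "e \<noteq> 0"
    and L: "\<And>s::real. Fc \<alpha> \<beta> \<gamma> \<delta> (Y + e * complex_of_real s) = 0"
    and Z: "Fc \<alpha> \<beta> \<gamma> \<delta> Z1 = 0" "Fc \<alpha> \<beta> \<gamma> \<delta> Z2 = 0" "Fc \<alpha> \<beta> \<gamma> \<delta> Z3 = 0"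
    and off: "\<And>s::real. Z1 \<noteq> Y + e * complex_of_real s" "\<And>s::real. Z2 \<noteq> Y + e * complex_of_real s"
      "\<And>s::real. Z3 \<noteq> Y + e * complex_of_real s"
  shows "collinear {Z1, Z2, Z3}"
proof -
  define \<alpha>' where "\<alpha>' = \<alpha> * e^2"
  define \<beta>' where "\<beta>' = \<beta> * (cmod e)^2"
  define \<gamma>' where "\<gamma>' = 2 * \<alpha> * Y * e + 2 * complex_of_real \<beta> * cnj Y * e + \<gamma> * e"
  define \<delta>' where "\<delta>' = Fc \<alpha> \<beta> \<gamma> \<delta> Y"
  have G: "Fc \<alpha> \<beta> \<gamma> \<delta> (Y + e * t) = Fc \<alpha>' \<beta>' \<gamma>' \<delta>' t" for t
    unfolding \<alpha>'_def \<beta>'_def \<gamma>'_def \<delta>'_def by (rule Fc_affine)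
  have Gr: "Fc \<alpha>' \<beta>' \<gamma>' \<delta>' (complex_of_real s) = (Re \<alpha>' + \<beta>') * s^2 + Re \<gamma>' * s + \<delta>'" for s
    unfolding Fc_def by (simp add: algebra_simps power2_eq_square)
  have z: "(Re \<alpha>' + \<beta>') * s^2 + Re \<gamma>' * s + \<delta>' = 0" for s using L[of s] G Gr by simp
  have d0: "\<delta>' = 0" using z[of 0] by simp
  have "Re \<alpha>' + \<beta>' + Re \<gamma>' = 0" "Re \<alpha>' + \<beta>' - Re \<gamma>' = 0" using z[of 1] z[of "-1"] d0 by simp_all
  then have h: "\<beta>' = - Re \<alpha>'" "Re \<gamma>' = 0" by linarith+
  have Gz: "Fc \<alpha>' \<beta>' \<gamma>' \<delta>' t = - Im t * (2 * Im \<alpha>' * Re t + 2 * Re \<alpha>' * Im t + Im \<gamma>')" for t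
    unfolding Fc_def cmod_power2 h(1) d0 by (simp add: algebra_simps power2_eq_square h(2))
  have AB: "2 * Im \<alpha>' \<noteq> 0 \<or> 2 * Re \<alpha>' \<noteq> 0"
  proof (rule ccontr)
    assume "\<not> (2 * Im \<alpha>' \<noteq> 0 \<or> 2 * Re \<alpha>' \<noteq> 0)"
    then have "\<alpha>' = 0" "\<beta>' = 0" using h by (auto simp: complex_eq_iff)
    then have "\<alpha> = 0" "\<beta> = 0" using e unfolding \<alpha>'_def \<beta>'_def by auto
    then show False using ab by simp
  qed
  define z1 where "z1 = (Z1 - Y) / e"
  define z2 where "z2 = (Z2 - Y) / e"
  define z3 where "z3 = (Z3 - Y) / e"
  have Zz: "Z1 = Y + e * z1" "Z2 = Y + e * z2" "Z3 = Y + e * z3" using e unfolding z1_def z2_def z3_def by simp_all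
  have im0: "Im t \<noteq> 0" if "Z = Y + e * t" "\<And>s::real. Z \<noteq> Y + e * complex_of_real s" for Z t
  proof
    assume "Im t = 0"
    then have "t = complex_of_real (Re t)" by (simp add: complex_eq_iff)
    then show False using that by metis
  qed
  have lin: "2 * Im \<alpha>' * Re t + 2 * Re \<alpha>' * Im t + Im \<gamma>' = 0" if "Fc \<alpha>' \<beta>' \<gamma>' \<delta>' t = 0" "Im t \<noteq> 0" for t
    using that Gz[of t] by simp
  have l1: "2 * Im \<alpha>' * Re z1 + 2 * Re \<alpha>' * Im z1 + Im \<gamma>' = 0"
    using lin im0[OF Zz(1) off(1)] Z(1) G[of z1] Zz(1) by simp
  have l2: "2 * Im \<alpha>' * Re z2 + 2 * Re \<alpha>' * Im z2 + Im \<gamma>' = 0"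
    using lin im0[OF Zz(2) off(2)] Z(2) G[of z2] Zz(2) by simp
  have l3: "2 * Im \<alpha>' * Re z3 + 2 * Re \<alpha>' * Im z3 + Im \<gamma>' = 0"
    using lin im0[OF Zz(3) off(3)] Z(3) G[of z3] Zz(3) by simp
  have cz: "(Im z2 - Im z1)*(Re z3 - Re z1) - (Re z2 - Re z1)*(Im z3 - Im z1) = 0"
    by (rule cross_zero[OF AB l1 l2 l3])
  have imz: "Im ((z2 - z1) * cnj (z3 - z1)) = 0" using cz by (simp add: algebra_simps)
  have "(Z2 - Z1) * cnj (Z3 - Z1) = (e * cnj e) * ((z2 - z1) * cnj (z3 - z1))"
    unfolding Zz by (simp add: algebra_simps)
  also have "\<dots> = complex_of_real ((cmod e)^2) * ((z2 - z1) * cnj (z3 - z1))" by (simp only: cmod_sq_c)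
  finally have "Im ((Z2 - Z1) * cnj (Z3 - Z1)) = 0" using imz by simp
  then show ?thesis using collinear_Im by blast
qed


lemma in_line1: "U \<in> line U V" unfolding line_iff by (rule exI[of _ 0]) simp
lemma in_line2: "V \<in> line U V" unfolding line_iff by (rule exI[of _ 1]) simp

lemma Im_lin: "Im ((z - U) * cnj e) = Re ((- \<i> * cnj e) * z) + Re (\<i> * cnj e * U)"
  by (simp add: algebra_simps)

lemma prod_Fc: "(Re (\<mu>1 * z) + c1) * (Re (\<mu>2 * z) + c2) =
   Fc (\<mu>1 * \<mu>2 / 2) (Re (\<mu>1 * cnj \<mu>2) / 2) (complex_of_real c2 * \<mu>1 + complex_of_real c1 * \<mu>2) (c1 * c2) z"
  unfolding Fc_def cmod_power2 by (simp add: field_simps power2_eq_square)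

lemma line_pair_conic:
  assumes "U \<noteq> V" "U' \<noteq> V'"
  shows "is_conic (line U V \<union> line U' V')"
proof -
  define \<mu>1 where "\<mu>1 = - \<i> * cnj (V - U)"
  define \<mu>2 where "\<mu>2 = - \<i> * cnj (V' - U')"
  define c1 where "c1 = Re (\<i> * cnj (V - U) * U)"
  define c2 where "c2 = Re (\<i> * cnj (V' - U') * U')"
  have m0: "\<mu>1 * \<mu>2 / 2 \<noteq> 0" using assms unfolding \<mu>1_def \<mu>2_def by simp
  have "line U V \<union> line U' V' = {z. Fc (\<mu>1 * \<mu>2 / 2) (Re (\<mu>1 * cnj \<mu>2) / 2) (complex_of_real c2 * \<mu>1 + complex_of_real c1 * \<mu>2) (c1 * c2) z = 0}"
  proof -
    have "z \<in> line U V \<union> line U' V' \<longleftrightarrow> (Re (\<mu>1 * z) + c1) * (Re (\<mu>2 * z) + c2) = 0" for z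
      using line_Im[OF assms(1), of z] line_Im[OF assms(2), of z] Im_lin[of z U "V - U"] Im_lin[of z U' "V' - U'"]
      unfolding \<mu>1_def \<mu>2_def c1_def c2_def by auto
    then show ?thesis unfolding prod_Fc by blast
  qed
  then show ?thesis unfolding conic_Fc using m0 by blast
qed

lemma two_conics:
  assumes nc: "\<not> collinear {U, V, W}" and Q: "Q \<notin> line U V" "Q \<notin> line V W" "Q \<notin> line W U"
    and uniq: "\<forall>K'. is_conic K' \<and> {U, V, W, Q} \<subseteq> K' \<longrightarrow> K' = K0"
  shows False
proof -
  have d: "U \<noteq> V" "U \<noteq> W" "W \<noteq> Q" "V \<noteq> Q" using nc Q in_line1 in_line2 by (auto simp: collinear_Im)
  define Ca where "Ca = line U V \<union> line W Q"
  define Cb where "Cb = line U W \<union> line V Q"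
  have "is_conic Ca" unfolding Ca_def using d by (intro line_pair_conic) auto
  moreover have "{U, V, W, Q} \<subseteq> Ca" unfolding Ca_def using in_line1 in_line2 by auto
  ultimately have a: "Ca = K0" using uniq by blast
  have "is_conic Cb" unfolding Cb_def using d by (intro line_pair_conic) auto
  moreover have "{U, V, W, Q} \<subseteq> Cb" unfolding Cb_def using in_line1 in_line2 by auto
  ultimately have b: "Cb = K0" using uniq by blast
  have "2 * V - U \<in> line U V" unfolding line_iff by (rule exI[of _ 2]) (simp add: algebra_simps)
  then have "2 * V - U \<in> Cb" using a b unfolding Ca_def by auto
  then show False unfolding Cb_def
  proof
    assume "2 * V - U \<in> line U W"
    then obtain t :: real where t: "2 * V - U = U + t * (W - U)" unfolding line_iff by blast
    then have "V - U = complex_of_real (t/2) * (W - U)" by (simp add: field_simps)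
    then have "(V - U) * cnj (W - U) = complex_of_real (t/2) * ((W - U) * cnj (W - U))" by simp
    also have "\<dots> = complex_of_real (t/2 * (cmod (W - U))^2)" by (simp only: cmod_sq_c of_real_mult)
    finally have eq: "(V - U) * cnj (W - U) = complex_of_real (t/2 * (cmod (W - U))^2)" .
    have "Im ((V - U) * cnj (W - U)) = 0" unfolding eq by simp
    then show False using nc collinear_Im by blast
  next
    assume "2 * V - U \<in> line V Q"
    then obtain t :: real where t: "2 * V - U = V + t * (Q - V)" unfolding line_iff by blast
    then have vu: "V - U = t * (Q - V)" by (simp add: algebra_simps)
    then have t0: "t \<noteq> 0" using d by auto
    have "Q = U + complex_of_real (1 + 1/t) * (V - U)" using vu t0 by (simp add: field_simps)
    then have "Q \<in> line U V" unfolding line_iff by blast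
    then show False using Q by simp
  qed
qed


lemma iso_R:
  fixes a b c p p' q q' :: complex
  assumes nz: "a \<noteq> 0" "b \<noteq> 0" "c \<noteq> 0" and d: "a \<noteq> b" "a \<noteq> c" "b \<noteq> c"
    and Ea: "(p'-a)*(p-a)*(1/b - 1/a)*(1/c - 1/a) = (q'-1/a)*(q-1/a)*(b-a)*(c-a)"
    and Eb: "(p'-b)*(p-b)*(1/c - 1/b)*(1/a - 1/b) = (q'-1/b)*(q-1/b)*(c-b)*(a-b)"
  shows "p + p' + a*b*c*q*q' = a+b+c"
proof -
  have ea: "(p'-a)*(p-a) = b*c*(a*q'-1)*(a*q-1)"
  proof -
    have "(p'-a)*(p-a)*(1/b - 1/a)*(1/c - 1/a) = ((p'-a)*(p-a)) * ((a-b)*(a-c)/(a*a*b*c))"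
      using nz by (simp add: field_simps)
    moreover have "(q'-1/a)*(q-1/a)*(b-a)*(c-a) = (b*c*(a*q'-1)*(a*q-1)) * ((a-b)*(a-c)/(a*a*b*c))"
      using nz by (simp add: field_simps)
    moreover have "(a-b)*(a-c)/(a*a*b*c) \<noteq> 0" using nz d by simp
    ultimately show ?thesis using Ea by (metis mult_cancel_right)
  qed
  have eb: "(p'-b)*(p-b) = c*a*(b*q'-1)*(b*q-1)"
  proof -
    have "(p'-b)*(p-b)*(1/c - 1/b)*(1/a - 1/b) = ((p'-b)*(p-b)) * ((b-c)*(b-a)/(b*b*c*a))"
      using nz by (simp add: field_simps)
    moreover have "(q'-1/b)*(q-1/b)*(c-b)*(a-b) = (c*a*(b*q'-1)*(b*q-1)) * ((b-c)*(b-a)/(b*b*c*a))"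
      using nz by (simp add: field_simps)
    moreover have "(b-c)*(b-a)/(b*b*c*a) \<noteq> 0" using nz d by simp
    ultimately show ?thesis using Eb by (metis mult_cancel_right)
  qed
  have "((p'-a)*(p-a) - b*c*(a*q'-1)*(a*q-1)) - ((p'-b)*(p-b) - c*a*(b*q'-1)*(b*q-1))
      = (a - b) * (a + b + c - p - p' - a*b*c*q*q')" by (simp add: algebra_simps)
  then have "(a - b) * (a + b + c - p - p' - a*b*c*q*q') = 0" using ea eb by simp
  then have z: "a + b + c - p - p' - a*b*c*q*q' = 0" using d by simp
  have "p + p' + a*b*c*q*q' = (a+b+c) - (a + b + c - p - p' - a*b*c*q*q')" by simp
  then show ?thesis unfolding z by simp
qed

lemma k_rel:
  fixes s e \<sigma> p q p' q' d x :: complex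
  assumes R: "p + p' + \<sigma>*q*q' = s" and Rb: "\<sigma>*q + \<sigma>*q' + p*p' = e"
    and Kd: "d*(p' - p) = - \<sigma>*(q' - q)" and Xr: "x*(d*q - 1) = d - p"
  shows "(p - d)*(p' - p) = e - 2*\<sigma>*q - p*p" "(1 - d*q)*(p' - p) = s - 2*p - \<sigma>*q*q"
    "d*(x*q - 1) = x - p" "x*(s - 2*p - \<sigma>*q*q) = e - 2*\<sigma>*q - p*p"
    "\<sigma>*(q' - q)*(p*q - 1) = (p - x)*(s - 2*p - \<sigma>*q*q)"
proof -
  show 1: "(p - d)*(p' - p) = e - 2*\<sigma>*q - p*p"
  proof -
    have "(p - d)*(p' - p) - (e - 2*\<sigma>*q - p*p) = (\<sigma>*q + \<sigma>*q' + p*p' - e) - (d*(p' - p) + \<sigma>*(q' - q))"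
      by (simp add: algebra_simps)
    then show ?thesis using Rb Kd by simp
  qed
  show 2: "(1 - d*q)*(p' - p) = s - 2*p - \<sigma>*q*q"
  proof -
    have "(1 - d*q)*(p' - p) - (s - 2*p - \<sigma>*q*q) = (p + p' + \<sigma>*q*q' - s) - q*(d*(p' - p) + \<sigma>*(q' - q))"
      by (simp add: algebra_simps)
    then show ?thesis using R Kd by simp
  qed
  show 3: "d*(x*q - 1) = x - p"
  proof -
    have "d*(x*q - 1) - (x - p) = x*(d*q - 1) - (d - p)" by (simp add: algebra_simps)
    then show ?thesis using Xr by simp
  qed
  show "x*(s - 2*p - \<sigma>*q*q) = e - 2*\<sigma>*q - p*p"
  proof -
    have "x*(s - 2*p - \<sigma>*q*q) = x*((1 - d*q)*(p' - p))" using 2 by simp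
    also have "\<dots> = (x*(1 - d*q))*(p' - p)" by (simp add: algebra_simps)
    also have "x*(1 - d*q) = p - d" using Xr by (simp add: algebra_simps)
    finally show ?thesis using 1 by simp
  qed
  show "\<sigma>*(q' - q)*(p*q - 1) = (p - x)*(s - 2*p - \<sigma>*q*q)"
  proof -
    have "\<sigma>*(q' - q)*(p*q - 1) - (p - x)*(s - 2*p - \<sigma>*q*q)
       = (d*(p' - p) + \<sigma>*(q' - q))*(p*q - 1) + (p' - p)*(d - p + x - d*x*q) - (p - x)*((s - 2*p - \<sigma>*q*q) - (1 - d*q)*(p' - p))"
      by (simp add: algebra_simps)
    moreover have "d - p + x - d*x*q = 0" using 3 by (simp add: algebra_simps)
    ultimately show ?thesis using Kd 2 by simp
  qed
qed

lemma star:
  fixes s e \<sigma> p q x V B \<kappa> q' :: complex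
  defines "W \<equiv> p*q - 1"
  defines "\<Phi> \<equiv> p*p - (s + x)*p + (e + s*x) - (\<sigma> + e*x)*q + \<sigma>*x*q*q"
  assumes sV: "s = V + 2*p + \<sigma>*q*q" and eV: "e = x*V + 2*\<sigma>*q + p*p"
    and BW: "B*W = - \<Phi>" and kp: "\<kappa>*(p - x) = \<sigma>*(x*q - 1)" and qW: "\<sigma>*q'*W = \<sigma>*q*W + (p - x)*V"
    and W0: "W \<noteq> 0" and px: "p \<noteq> x"
  shows "(x*x - s*x + B)*(B + \<kappa> - \<sigma>*q') = (\<sigma> - e*x + B*x)*(x + \<kappa>*q')"
proof -
  define F1 where "F1 = x*x*W - s*x*W - \<Phi>"
  define F2 where "F2 = - \<Phi>*(p - x) + \<sigma>*(x*q - 1)*W - (\<sigma>*q*W + (p - x)*V)*(p - x)"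
  define G1 where "G1 = (\<sigma> - e*x)*W - \<Phi>*x"
  define G2 where "G2 = x*W*(p - x) + (x*q - 1)*(\<sigma>*q*W + (p - x)*V)"
  have id: "F1*F2 = G1*G2" unfolding F1_def F2_def G1_def G2_def \<Phi>_def W_def sV eV
    by (simp add: algebra_simps)
  have a1: "(x*x - s*x + B)*W = F1" unfolding F1_def using BW by (simp add: algebra_simps)
  have a2: "(B + \<kappa> - \<sigma>*q')*(W*(p - x)) = F2"
  proof -
    have "(B + \<kappa> - \<sigma>*q')*(W*(p - x)) = (B*W)*(p - x) + (\<kappa>*(p - x))*W - (\<sigma>*q'*W)*(p - x)"
      by (simp add: algebra_simps)
    then show ?thesis unfolding F2_def BW kp qW .
  qed
  have b1: "(\<sigma> - e*x + B*x)*W = G1"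
  proof -
    have "(\<sigma> - e*x + B*x)*W = (\<sigma> - e*x)*W + (B*W)*x" by (simp add: algebra_simps)
    then show ?thesis unfolding G1_def BW by simp
  qed
  have b2: "(x + \<kappa>*q')*(W*(p - x)) = G2"
  proof -
    have "(x + \<kappa>*q')*(W*(p - x)) = x*W*(p - x) + (\<kappa>*(p - x))*q'*W" by (simp add: algebra_simps)
    also have "\<dots> = x*W*(p - x) + (x*q - 1)*(\<sigma>*q'*W)" unfolding kp by (simp add: algebra_simps)
    finally show ?thesis unfolding G2_def qW .
  qed
  have "((x*x - s*x + B)*(B + \<kappa> - \<sigma>*q'))*(W*(W*(p - x))) = ((\<sigma> - e*x + B*x)*(x + \<kappa>*q'))*(W*(W*(p - x)))"
  proof -
    have "((x*x - s*x + B)*(B + \<kappa> - \<sigma>*q'))*(W*(W*(p - x))) = ((x*x - s*x + B)*W)*((B + \<kappa> - \<sigma>*q')*(W*(p - x)))"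
      by (simp add: algebra_simps)
    also have "\<dots> = F1*F2" unfolding a1 a2 ..
    also have "\<dots> = G1*G2" by (rule id)
    also have "\<dots> = ((\<sigma> - e*x + B*x)*W)*((x + \<kappa>*q')*(W*(p - x)))" unfolding b1 b2 ..
    also have "\<dots> = ((\<sigma> - e*x + B*x)*(x + \<kappa>*q'))*(W*(W*(p - x)))" by (simp add: algebra_simps)
    finally show ?thesis .
  qed
  moreover have "W*(W*(p - x)) \<noteq> 0" using W0 px by simp
  ultimately show ?thesis by simp
qed


lemma bezout:
  fixes h hc \<alpha> \<alpha>c \<beta>2 \<kappa> w1 w2 :: complex
  shows "((w1 - \<kappa>)*(h*w1 + hc)) * (\<alpha>*w2^2 + \<beta>2*w2 + \<alpha>c) - ((w2 - \<kappa>)*(h*w2 + hc)) * (\<alpha>*w1^2 + \<beta>2*w1 + \<alpha>c)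
    = (w1 - w2) * ((h*\<beta>2 - (hc - \<kappa>*h)*\<alpha>)*w1*w2 + (h*\<alpha>c + \<kappa>*hc*\<alpha>)*(w1 + w2) + ((hc - \<kappa>*h)*\<alpha>c + \<kappa>*hc*\<beta>2))"
  by (simp add: algebra_simps power2_eq_square)

lemma key_id:
  fixes \<alpha> \<alpha>c \<beta>2 h hc \<kappa> s e \<sigma> x B q' :: complex
  assumes ac: "\<alpha>c = \<alpha>*\<sigma>*x" and b2: "\<beta>2 = \<alpha>*B" and hh: "h = \<alpha>*(x - s + B/x)" and hc: "hc = \<alpha>*(\<sigma> - e*x + B*x)"
    and x0: "x \<noteq> 0"
    and st: "(x*x - s*x + B)*(B + \<kappa> - \<sigma>*q') = (\<sigma> - e*x + B*x)*(x + \<kappa>*q')"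
  shows "(h*\<beta>2 - (hc - \<kappa>*h)*\<alpha>) * x = (h*\<alpha>c + \<kappa>*hc*\<alpha>) * q'"
proof -
  have hx: "h * x = \<alpha>*(x*x - s*x + B)" unfolding hh using x0 by (simp add: field_simps)
  have "(h*\<beta>2 - (hc - \<kappa>*h)*\<alpha>) * x - (h*\<alpha>c + \<kappa>*hc*\<alpha>) * q'
     = \<alpha> * ((h*x)*(B + \<kappa> - \<sigma>*q') - hc*(x + \<kappa>*q'))"
    unfolding ac b2 by (simp add: algebra_simps)
  also have "\<dots> = \<alpha> * \<alpha> * ((x*x - s*x + B)*(B + \<kappa> - \<sigma>*q') - (\<sigma> - e*x + B*x)*(x + \<kappa>*q'))"
    unfolding hx hc by (simp add: algebra_simps)
  also have "\<dots> = 0" using st by simp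
  finally show ?thesis by simp
qed

lemma hM_zero:
  fixes h hc \<alpha> \<alpha>c \<beta>2 \<kappa> :: complex
  assumes "h*\<alpha>c + \<kappa>*hc*\<alpha> = 0" "h*\<beta>2 - (hc - \<kappa>*h)*\<alpha> = 0"
  shows "h * (\<alpha>*\<kappa>^2 + \<beta>2*\<kappa> + \<alpha>c) = 0"
proof -
  have "h * (\<alpha>*\<kappa>^2 + \<beta>2*\<kappa> + \<alpha>c) = (h*\<alpha>c + \<kappa>*hc*\<alpha>) + \<kappa> * (h*\<beta>2 - (hc - \<kappa>*h)*\<alpha>)"
    by (simp add: algebra_simps power2_eq_square)
  then show ?thesis using assms by simp
qed

lemma bez_alg:
  fixes e1 e2 w1 w2 N1 N2 M1 M2 LL1 LL2 QQ1 QQ2 S1 S2 \<kappa> :: complex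
  assumes nz: "e1 \<noteq> 0" "e2 \<noteq> 0" "w1 \<noteq> 0" "w2 \<noteq> 0"
    and L1: "LL1 = e1*N1/(2*w1)" and L2: "LL2 = e2*N2/(2*w2)"
    and Q1: "QQ1 = e1^2*M1/(2*w1^2)" and Q2: "QQ2 = e2^2*M2/(2*w2^2)"
    and SQ1: "S1*QQ1 = - LL1" and SQ2: "S2*QQ2 = - LL2"
    and par: "S1*e1 - S2*e2 = \<kappa>*(S1*e1/w1 - S2*e2/w2)"
  shows "N1*M2*(w1 - \<kappa>) = N2*M1*(w2 - \<kappa>)"
proof -
  have m1: "(S1*e1 - S2*e2)*(QQ1*QQ2) = -LL1*QQ2*e1 + LL2*QQ1*e2"
  proof -
    have "(S1*e1 - S2*e2)*(QQ1*QQ2) = (S1*QQ1)*QQ2*e1 - (S2*QQ2)*QQ1*e2" by (simp add: algebra_simps)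
    also have "\<dots> = -LL1*QQ2*e1 + LL2*QQ1*e2" unfolding SQ1 SQ2 by simp
    finally show ?thesis .
  qed
  have m2: "\<kappa>*(S1*e1/w1 - S2*e2/w2)*(QQ1*QQ2) = \<kappa>*(-LL1*QQ2*e1/w1 + LL2*QQ1*e2/w2)"
  proof -
    have "\<kappa>*(S1*e1/w1 - S2*e2/w2)*(QQ1*QQ2) = \<kappa>*((S1*QQ1)*QQ2*e1/w1 - (S2*QQ2)*QQ1*e2/w2)"
      by (simp add: algebra_simps)
    also have "\<dots> = \<kappa>*(-LL1*QQ2*e1/w1 + LL2*QQ1*e2/w2)" unfolding SQ1 SQ2 by simp
    finally show ?thesis .
  qed
  have E: "-LL1*QQ2*e1 + LL2*QQ1*e2 = \<kappa>*(-LL1*QQ2*e1/w1 + LL2*QQ1*e2/w2)"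
    using par m1 m2 by metis
  have F: "(-LL1*QQ2*e1 + LL2*QQ1*e2) - \<kappa>*(-LL1*QQ2*e1/w1 + LL2*QQ1*e2/w2)
     = (e1^2*e2^2/(4*w1^2*w2^2)) * (N2*M1*(w2 - \<kappa>) - N1*M2*(w1 - \<kappa>))"
    unfolding L1 L2 Q1 Q2 using nz by (simp add: field_simps power2_eq_square)
  have "(e1^2*e2^2/(4*w1^2*w2^2)) * (N2*M1*(w2 - \<kappa>) - N1*M2*(w1 - \<kappa>)) = 0" using E F by simp
  moreover have "e1^2*e2^2/(4*w1^2*w2^2) \<noteq> 0" using nz by simp
  ultimately show ?thesis by simp
qed


lemma Fc_expand:
  "Fc \<alpha> \<beta> \<gamma> \<delta> (Y + e * complex_of_real s) = Fc \<alpha> \<beta> \<gamma> \<delta> Y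
     + s * Re ((2*\<alpha>*Y + 2*complex_of_real \<beta>*cnj Y + \<gamma>) * e) + s^2 * (Re (\<alpha> * e^2) + \<beta> * (cmod e)^2)"
proof -
  have "Fc \<alpha> \<beta> \<gamma> \<delta> (Y + e * complex_of_real s) = Fc (\<alpha> * e^2) (\<beta> * (cmod e)^2)
     (2 * \<alpha> * Y * e + 2 * complex_of_real \<beta> * cnj Y * e + \<gamma> * e) (Fc \<alpha> \<beta> \<gamma> \<delta> Y) (complex_of_real s)"
    by (rule Fc_affine)
  also have "\<dots> = Fc \<alpha> \<beta> \<gamma> \<delta> Y
     + s * Re ((2*\<alpha>*Y + 2*complex_of_real \<beta>*cnj Y + \<gamma>) * e) + s^2 * (Re (\<alpha> * e^2) + \<beta> * (cmod e)^2)"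
    unfolding Fc_def by (simp add: algebra_simps power2_eq_square)
  finally show ?thesis .
qed

lemma Qc: "complex_of_real (Re (\<alpha> * e^2) + \<beta> * (cmod e)^2) = (\<alpha> * e^2 + cnj \<alpha> * (cnj e)^2 + 2 * complex_of_real \<beta> * e * cnj e) / 2"
  unfolding of_real_add of_real_mult Re_c cmod_sq_c by (simp add: field_simps)

lemma Lc: "complex_of_real (Re (h * e)) = (h * e + cnj h * cnj e) / 2"
  unfolding Re_c by simp

lemma on_line_col:
  assumes "z1 = Y + e * complex_of_real s1" "z2 = Y + e * complex_of_real s2" "z3 = Y + e * complex_of_real s3"
  shows "collinear {z1, z2, z3}"
proof -
  have "(z2 - z1) * cnj (z3 - z1) = complex_of_real ((s2 - s1) * (s3 - s1)) * (e * cnj e)"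
    unfolding assms by (simp add: algebra_simps)
  also have "\<dots> = complex_of_real ((s2 - s1) * (s3 - s1) * (cmod e)^2)" by (simp only: cmod_sq_c of_real_mult)
  finally have eq: "(z2 - z1) * cnj (z3 - z1) = complex_of_real ((s2 - s1) * (s3 - s1) * (cmod e)^2)" .
  have "Im ((z2 - z1) * cnj (z3 - z1)) = 0" unfolding eq by simp
  then show ?thesis using collinear_Im by blast
qed

lemma col_to_line:
  assumes "collinear {U, V, W}" "U \<noteq> V"
  shows "\<exists>t::real. W = U + complex_of_real t * (V - U)"
proof -
  have "Im ((V - U) * cnj (W - U)) = 0" using assms collinear_Im by blast
  moreover have "(W - U) * cnj (V - U) = cnj ((V - U) * cnj (W - U))" by simp
  moreover have imc: "Im (cnj z) = - Im z" for z by simp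
  ultimately have "Im ((W - U) * cnj (V - U)) = 0" by (metis neg_equal_0_iff_equal)
  then have "W \<in> line U V" using line_Im[OF assms(2)] by blast
  then show ?thesis unfolding line_iff .
qed

lemma no_line:
  assumes ab: "\<alpha> \<noteq> 0 \<or> \<beta> \<noteq> 0" and e: "e \<noteq> 0"
    and L: "\<And>s::real. Fc \<alpha> \<beta> \<gamma> \<delta> (Y + e * complex_of_real s) = 0"
    and Z: "Fc \<alpha> \<beta> \<gamma> \<delta> z1 = 0" "Fc \<alpha> \<beta> \<gamma> \<delta> z2 = 0" "Fc \<alpha> \<beta> \<gamma> \<delta> z3 = 0"
           "Fc \<alpha> \<beta> \<gamma> \<delta> z4 = 0" "Fc \<alpha> \<beta> \<gamma> \<delta> z5 = 0"
    and nc: "\<not> collinear {z1,z2,z3}" "\<not> collinear {z1,z2,z4}" "\<not> collinear {z1,z2,z5}"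
      "\<not> collinear {z1,z3,z4}" "\<not> collinear {z1,z3,z5}" "\<not> collinear {z1,z4,z5}"
      "\<not> collinear {z2,z3,z4}" "\<not> collinear {z2,z3,z5}" "\<not> collinear {z2,z4,z5}" "\<not> collinear {z3,z4,z5}"
  shows False
proof -
  define on where "on z \<longleftrightarrow> (\<exists>s::real. z = Y + e * complex_of_real s)" for z
  have onc: "collinear {u, v, w}" if "on u" "on v" "on w" for u v w
    using that unfolding on_def by (metis on_line_col)
  have offc: "collinear {u, v, w}" if "Fc \<alpha> \<beta> \<gamma> \<delta> u = 0" "Fc \<alpha> \<beta> \<gamma> \<delta> v = 0" "Fc \<alpha> \<beta> \<gamma> \<delta> w = 0"
    "\<not> on u" "\<not> on v" "\<not> on w" for u v w
    using that unfolding on_def by (intro conic_line[OF ab e L]) auto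
  show False
    using onc offc Z nc by (cases "on z1"; cases "on z2"; cases "on z3"; cases "on z4"; cases "on z5") blast+
qed

lemma col_nz:
  fixes U V W c0 m :: complex
  assumes "m \<noteq> 0"
  shows "collinear {(U - c0)/m, (V - c0)/m, (W - c0)/m} \<longleftrightarrow> collinear {U, V, W}"
proof -
  have "((V - c0)/m - (U - c0)/m) * cnj ((W - c0)/m - (U - c0)/m) = ((V - U) * cnj (W - U)) / (m * cnj m)"
    using assms by (simp add: field_simps)
  also have "\<dots> = ((V - U) * cnj (W - U)) / complex_of_real ((cmod m)^2)" by (simp only: cmod_sq_c)
  finally have eq: "((V - c0)/m - (U - c0)/m) * cnj ((W - c0)/m - (U - c0)/m) = ((V - U) * cnj (W - U)) / complex_of_real ((cmod m)^2)" .
  have "Im (((V - c0)/m - (U - c0)/m) * cnj ((W - c0)/m - (U - c0)/m)) = Im ((V - U) * cnj (W - U)) / (cmod m)^2"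
    unfolding eq by (simp add: Im_divide_of_real)
  then show ?thesis unfolding collinear_Im using assms by simp
qed


lemma FK: "Fc (\<i> * k * cnj \<sigma>) (Re (- \<i> * cnj k * p)) (\<i> * cnj k - \<i> * k * cnj e) (Re (- \<i> * cnj k * (s - p))) t
  = Re (- \<i> * cnj k * (s - t - e * cnj t + \<sigma> * (cnj t)^2 - p + p * t * cnj t))"
proof -
  have "complex_of_real (Fc (\<i> * k * cnj \<sigma>) (Re (- \<i> * cnj k * p)) (\<i> * cnj k - \<i> * k * cnj e) (Re (- \<i> * cnj k * (s - p))) t)
    = complex_of_real (Re (- \<i> * cnj k * (s - t - e * cnj t + \<sigma> * (cnj t)^2 - p + p * t * cnj t)))"
    unfolding Fc_c Re_c
    apply (simp only: complex_cnj_mult complex_cnj_add complex_cnj_diff complex_cnj_cnj complex_cnj_i complex_cnj_minus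
       complex_cnj_power)
    apply (simp add: field_simps power2_eq_square)
    done
  then show ?thesis by (simp only: of_real_eq_iff)
qed


lemma nz_line: "m \<noteq> 0 \<Longrightarrow> z \<in> line U V \<Longrightarrow> \<exists>t::real. (z - c0)/m = (U - c0)/m + complex_of_real t * ((V - c0)/m - (U - c0)/m)"
  for z U V c0 m :: complex
proof -
  assume m0: "m \<noteq> 0" and "z \<in> line U V"
  then obtain t :: real where "z = U + t * (V - U)" unfolding line_iff by blast
  then have "z - c0 = (U - c0) + complex_of_real t * ((V - c0) - (U - c0))" by simp
  then have "(z - c0)/m = ((U - c0) + complex_of_real t * ((V - c0) - (U - c0)))/m" by simp
  also have "\<dots> = (U - c0)/m + complex_of_real t * ((V - c0)/m - (U - c0)/m)"
    using m0 by (simp add: field_simps)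
  finally have "(z - c0)/m = (U - c0)/m + complex_of_real t * ((V - c0)/m - (U - c0)/m)" .
  then show ?thesis by blast
qed

lemma unit_nz: "cmod (z - c0) = R \<Longrightarrow> R > 0 \<Longrightarrow> cmod ((z - c0) / complex_of_real R) = 1"
  by (simp add: norm_divide)

lemma Im_scale4: "Im (complex_of_real r * w) = r * Im w" by simp

lemma chord_alg:
  fixes x d p q :: complex and t :: real
  assumes nz: "x \<noteq> 0" "d \<noteq> 0" and xd: "x \<noteq> d"
    and xt: "x = d + complex_of_real t * (p - d)" and cx: "1/x = 1/d + complex_of_real t * (q - 1/d)"
  shows "x*(d*q - 1) = d - p"
proof -
  have t0: "complex_of_real t \<noteq> 0" using xt xd by auto
  have e1: "complex_of_real t * (p - d) = x - d" using xt by simp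
  have e3: "complex_of_real t * (q - 1/d) = 1/x - 1/d" using cx by simp
  have "complex_of_real t * (d*q - 1) = d * (complex_of_real t * (q - 1/d))" using nz by (simp add: field_simps)
  also have "\<dots> = d * (1/x - 1/d)" unfolding e3 ..
  also have "\<dots> = - (x - d) / x" using nz by (simp add: field_simps)
  finally have e2: "complex_of_real t * (d*q - 1) = - (x - d) / x" .
  have "complex_of_real t * (x*(d*q - 1)) = x * (complex_of_real t * (d*q - 1))" by (simp add: mult_ac)
  also have "\<dots> = - (x - d)" unfolding e2 using nz by simp
  also have "\<dots> = complex_of_real t * (d - p)" using e1 by (simp add: algebra_simps)
  finally show ?thesis using t0 by simp
qed

lemma cnj_self_Im: assumes "cnj w = w" shows "Im w = 0"
proof -
  have "Im w = Im (cnj w)" using assms by simp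
  then show ?thesis by simp
qed

lemma chord_unit: "cmod u = 1 \<Longrightarrow> cmod v = 1 \<Longrightarrow> u - v = - (u * v) * cnj (u - v)"
  using unit_cnj[of u] unit_cnj[of v] by (auto simp: field_simps)

lemma chord_scaled:
  assumes u: "cmod u = 1" "cmod v = 1" and Z: "Z = complex_of_real r * (u - v)"
  shows "Z = - (u * v) * cnj Z"
proof -
  have cZ: "cnj Z = complex_of_real r * cnj (u - v)" unfolding Z by simp
  have "- (u * v) * cnj Z = complex_of_real r * (- (u * v) * cnj (u - v))" unfolding cZ by (simp only: mult_ac)
  also have "\<dots> = complex_of_real r * (u - v)" unfolding chord_unit[OF u, symmetric] ..
  finally show ?thesis unfolding Z by simp
qed

lemma col_trans:
  fixes U V W1 W2 :: complex
  assumes "U \<noteq> V" "collinear {U, V, W1}" "collinear {U, V, W2}"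
  shows "collinear {V, W1, W2}"
proof -
  obtain t1 :: real where t1: "W1 = U + complex_of_real t1 * (V - U)" using col_to_line[OF assms(2,1)] by blast
  obtain t2 :: real where t2: "W2 = U + complex_of_real t2 * (V - U)" using col_to_line[OF assms(3,1)] by blast
  have "V = U + (V - U) * complex_of_real 1" by simp
  moreover have "W1 = U + (V - U) * complex_of_real t1" using t1 by (simp add: mult.commute)
  moreover have "W2 = U + (V - U) * complex_of_real t2" using t2 by (simp add: mult.commute)
  ultimately show ?thesis by (rule on_line_col)
qed

lemma notline_col: fixes U V Q :: complex assumes "U \<noteq> V" "Q \<notin> line U V" shows "\<not> collinear {U, V, Q}"
proof
  assume "collinear {U, V, Q}"
  then obtain t :: real where "Q = U + complex_of_real t * (V - U)" using col_to_line assms(1) by blast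
  then have "Q \<in> line U V" unfolding line_iff by blast
  then show False using assms(2) by simp
qed

lemma B0_rel:
  fixes \<alpha>1 h \<kappa> x pp qq :: complex and \<beta>1 :: real
  assumes k: "cnj \<kappa> = 1 / \<kappa>" "\<kappa> \<noteq> 0" and cx: "cnj x = 1 / x" "x \<noteq> 0" and cq: "cnj qq = pp"
    and key: "(h*(2*complex_of_real \<beta>1) - (cnj h - \<kappa>*h)*\<alpha>1) * x = (h*cnj \<alpha>1 + \<kappa>*cnj h*\<alpha>1) * qq"
  shows "(cnj h - \<kappa>*h)*cnj \<alpha>1 + \<kappa>*cnj h*(2*complex_of_real \<beta>1) = x * (h*cnj \<alpha>1 + \<kappa>*cnj h*\<alpha>1) * pp"
proof -
  have "cnj ((h*(2*complex_of_real \<beta>1) - (cnj h - \<kappa>*h)*\<alpha>1) * x) = cnj ((h*cnj \<alpha>1 + \<kappa>*cnj h*\<alpha>1) * qq)"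
    using key by simp
  then have c: "(cnj h*(2*complex_of_real \<beta>1) - (h - (1/\<kappa>)*cnj h)*cnj \<alpha>1) * (1/x) = (cnj h*\<alpha>1 + (1/\<kappa>)*h*cnj \<alpha>1) * pp"
    by (simp only: complex_cnj_mult complex_cnj_diff complex_cnj_add complex_cnj_cnj complex_cnj_complex_of_real
        complex_cnj_numeral k(1) cx(1) cq)
  have "(cnj h - \<kappa>*h)*cnj \<alpha>1 + \<kappa>*cnj h*(2*complex_of_real \<beta>1)
     = (\<kappa> * x) * ((cnj h*(2*complex_of_real \<beta>1) - (h - (1/\<kappa>)*cnj h)*cnj \<alpha>1) * (1/x))"
    using k(2) cx(2) by (simp add: field_simps)
  also have "\<dots> = (\<kappa> * x) * ((cnj h*\<alpha>1 + (1/\<kappa>)*h*cnj \<alpha>1) * pp)" unfolding c ..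
  also have "\<dots> = x * (h*cnj \<alpha>1 + \<kappa>*cnj h*\<alpha>1) * pp" using k(2) by (simp add: field_simps)
  finally show ?thesis .
qed

theorem lemma4p4:
  fixes A B C P P' D X Y Z X1 X2 :: complex
    and \<Omega> K \<Gamma> C1 :: "complex set"
  assumes tri: "\<not> collinear {A, B, C}"
    and Om: "is_circle \<Omega>" "A \<in> \<Omega>" "B \<in> \<Omega>" "C \<in> \<Omega>"
    and Ppos: "P \<notin> line A B" "P \<notin> line B C" "P \<notin> line C A" "P \<notin> \<Omega>"
    and iso: "isogonal_conjugate A B C P P'"
    and K: "is_conic K" "{A, B, C, P, P'} \<subseteq> K"
           "\<forall>K'. is_conic K' \<and> {A, B, C, P, P'} \<subseteq> K' \<longrightarrow> K' = K"
    and D: "D \<in> \<Omega>" "D \<in> K" "D \<notin> {A, B, C}"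
    and Xd: "X \<in> \<Omega>" "X \<in> line D P" "X \<noteq> D"
    and Yd: "Y \<in> \<Omega>" "Y \<in> line D P'" "Y \<noteq> D"
    and Gam: "is_circle \<Gamma>" "{P, X, Y} \<subseteq> \<Gamma>"
             "\<forall>\<Gamma>'. is_circle \<Gamma>' \<and> {P, X, Y} \<subseteq> \<Gamma>' \<longrightarrow> \<Gamma>' = \<Gamma>"
    and Zd: "Z \<in> \<Gamma>" "Z \<in> line P P'" "Z \<noteq> P"
    and C1: "is_conic C1" "{A, B, C, P, X} \<subseteq> C1"
            "\<forall>K'. is_conic K' \<and> {A, B, C, P, X} \<subseteq> K' \<longrightarrow> K' = C1"
    and X12: "X1 \<in> C1" "X2 \<in> C1" "X1 \<noteq> X2" "X1 \<notin> {P, X}" "X2 \<notin> {P, X}"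
             "concyclic {P, X, X1, X2}"
  shows "parallel_lines (line X1 X2) (line P Z) \<and>
    (\<forall>X1' X2'. X1' \<in> \<Omega> \<and> X1' \<in> line X X1 \<and> X1' \<noteq> X \<and>
               X2' \<in> \<Omega> \<and> X2' \<in> line X X2 \<and> X2' \<noteq> X \<longrightarrow> collinear {P', X1', X2'})"
proof -
  obtain c0 and R :: real where R0: "R > 0" and Omeq: "\<Omega> = {z. cmod (z - c0) = R}"
    using Om(1) unfolding is_circle_def by blast
  define nz where "nz z = (z - c0) / complex_of_real R" for z
  have Rc0: "complex_of_real R \<noteq> 0" using R0 by simp
  have nz_inv: "z = c0 + complex_of_real R * nz z" for z unfolding nz_def using Rc0 by simp
  have nz_eq: "nz z = nz w \<longleftrightarrow> z = w" for z w unfolding nz_def using Rc0 by (auto simp: divide_cancel_right)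
  have nz_diff: "z - w = complex_of_real R * (nz z - nz w)" for z w unfolding nz_def using Rc0 by (simp add: field_simps)
  have nz_unit: "z \<in> \<Omega> \<longleftrightarrow> cmod (nz z) = 1" for z
    unfolding Omeq nz_def using R0 by (auto simp: norm_divide)
  have nz_col: "collinear {nz U, nz V, nz W} \<longleftrightarrow> collinear {U, V, W}" for U V W
    unfolding nz_def using col_nz[OF Rc0] by blast
  have nz_line: "z \<in> line U V \<Longrightarrow> \<exists>t::real. nz z = nz U + complex_of_real t * (nz V - nz U)" for z U V
    unfolding nz_def using Rc0 by (rule nz_line)
  define a where "a = nz A"
  define b where "b = nz B"
  define c where "c = nz C"
  define p where "p = nz P"
  define pp where "pp = nz P'"
  define d where "d = nz D"
  define x where "x = nz X"
  define x1 where "x1 = nz X1"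
  define x2 where "x2 = nz X2"
  define q where "q = cnj p"
  define qq where "qq = cnj pp"
  define \<sigma> where "\<sigma> = a*b*c"
  define s where "s = a+b+c"
  define e where "e = a*b+b*c+c*a"
  have ua: "cmod a = 1" "cmod b = 1" "cmod c = 1" "cmod d = 1" "cmod x = 1"
    unfolding a_def b_def c_def d_def x_def using nz_unit Om D Xd by auto
  have up: "cmod p \<noteq> 1" unfolding p_def using nz_unit Ppos(4) by auto
  have ca: "cnj a = 1/a" "cnj b = 1/b" "cnj c = 1/c" "cnj d = 1/d" "cnj x = 1/x" using unit_cnj ua by auto
  have nz0: "a \<noteq> 0" "b \<noteq> 0" "c \<noteq> 0" "d \<noteq> 0" "x \<noteq> 0" using ua by auto
  have tri': "\<not> collinear {a, b, c}" unfolding a_def b_def c_def nz_col using tri .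
  have dABC: "A \<noteq> B" "A \<noteq> C" "B \<noteq> C"
  proof -
    show "A \<noteq> B" proof assume "A = B" then have "{A,B,C} = {A,C}" by auto then show False using tri collinear_2 by metis qed
    show "A \<noteq> C" proof assume "A = C" then have "{A,B,C} = {A,B}" by auto then show False using tri collinear_2 by metis qed
    show "B \<noteq> C" proof assume "B = C" then have "{A,B,C} = {A,B}" by auto then show False using tri collinear_2 by metis qed
  qed
  have dabc: "a \<noteq> b" "a \<noteq> c" "b \<noteq> c" unfolding a_def b_def c_def nz_eq using dABC by auto
  have dd: "d \<noteq> a" "d \<noteq> b" "d \<noteq> c" unfolding a_def b_def c_def d_def nz_eq using D(3) by auto
  have xd: "x \<noteq> d" unfolding x_def d_def nz_eq using Xd(3) .
  have pd: "p \<noteq> d" "p \<noteq> x" using up ua by auto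
  have PP: "P \<noteq> P'"
  proof
    assume "P = P'"
    then have "Z = P" using Zd(2) unfolding line_iff by auto
    then show False using Zd(3) by simp
  qed
  have ppp: "pp \<noteq> p" unfolding pp_def p_def nz_eq using PP by auto
  have Xabc: "X \<noteq> A" "X \<noteq> B" "X \<noteq> C"
  proof -
    have PAB: "P \<notin> line A B" "P \<notin> line B C" "P \<notin> line C A" using Ppos by auto
    have "X \<in> {A, B, C} \<Longrightarrow> False"
    proof -
      assume "X \<in> {A, B, C}"
      then have "{A, B, C, P, X} = {A, B, C, P}" by auto
      then show False using two_conics[OF tri PAB, of C1] C1(3) by simp
    qed
    then show "X \<noteq> A" "X \<noteq> B" "X \<noteq> C" by auto
  qed
  have dx: "x \<noteq> a" "x \<noteq> b" "x \<noteq> c" unfolding a_def b_def c_def x_def nz_eq using Xabc by auto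
  have dif: "P' - A = complex_of_real R * (pp - a)" "P - A = complex_of_real R * (p - a)"
    "B - A = complex_of_real R * (b - a)" "C - A = complex_of_real R * (c - a)"
    "P' - B = complex_of_real R * (pp - b)" "P - B = complex_of_real R * (p - b)"
    "C - B = complex_of_real R * (c - b)" "A - B = complex_of_real R * (a - b)"
    unfolding pp_def p_def a_def b_def c_def by (rule nz_diff)+
  have isoA: "Im ((P' - A) * (P - A) * cnj (B - A) * cnj (C - A)) = 0"
    using iso_cond[OF tri] iso unfolding isogonal_conjugate_def by blast
  have tri2: "\<not> collinear {B, C, A}" using tri by (simp add: insert_commute)
  have isoB: "Im ((P' - B) * (P - B) * cnj (C - B) * cnj (A - B)) = 0"
    using iso_cond[OF tri2] iso unfolding isogonal_conjugate_def by blast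
  have W4: "Im (w1 * w2 * cnj w3 * cnj w4) = 0" if "Im ((complex_of_real R * w1) * (complex_of_real R * w2) * cnj (complex_of_real R * w3) * cnj (complex_of_real R * w4)) = 0" for w1 w2 w3 w4
  proof -
    have cR: "cnj (complex_of_real R * w) = complex_of_real R * cnj w" for w by simp
    have pr: "(r * w1) * (r * w2) * (r * z3) * (r * z4) = r^4 * (w1 * w2 * z3 * z4)" for r z3 z4 :: complex
      by (simp add: power4_eq_xxxx mult_ac)
    have eq: "(complex_of_real R * w1) * (complex_of_real R * w2) * cnj (complex_of_real R * w3) * cnj (complex_of_real R * w4)
      = complex_of_real (R^4) * (w1 * w2 * cnj w3 * cnj w4)" unfolding cR pr by simp
    from that have "R^4 * Im (w1 * w2 * cnj w3 * cnj w4) = 0" unfolding eq Im_scale4 .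
    moreover have "R^4 \<noteq> 0" using R0 by simp
    ultimately show ?thesis by (metis mult_eq_0_iff)
  qed
  have iA: "Im ((pp - a) * (p - a) * cnj (b - a) * cnj (c - a)) = 0" using W4 isoA unfolding dif by blast
  have iB: "Im ((pp - b) * (p - b) * cnj (c - b) * cnj (a - b)) = 0" using W4 isoB unfolding dif by blast
  have Ea: "(pp-a)*(p-a)*(1/b - 1/a)*(1/c - 1/a) = (qq-1/a)*(q-1/a)*(b-a)*(c-a)"
  proof -
    have "(pp - a) * (p - a) * cnj (b - a) * cnj (c - a) = cnj ((pp - a) * (p - a) * cnj (b - a) * cnj (c - a))"
      using real_cnj[OF iA] by simp
    then show ?thesis unfolding qq_def q_def by (simp only: complex_cnj_mult complex_cnj_diff complex_cnj_cnj) (simp only: ca)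
  qed
  have Eb: "(pp-b)*(p-b)*(1/c - 1/b)*(1/a - 1/b) = (qq-1/b)*(q-1/b)*(c-b)*(a-b)"
  proof -
    have "(pp - b) * (p - b) * cnj (c - b) * cnj (a - b) = cnj ((pp - b) * (p - b) * cnj (c - b) * cnj (a - b))"
      using real_cnj[OF iB] by simp
    then show ?thesis unfolding qq_def q_def by (simp only: complex_cnj_mult complex_cnj_diff complex_cnj_cnj) (simp only: ca)
  qed
  have R: "p + pp + \<sigma>*q*qq = s" unfolding \<sigma>_def s_def by (rule iso_R[OF nz0(1-3) dabc Ea Eb])
  have Rb: "\<sigma>*q + \<sigma>*qq + p*pp = e"
  proof -
    have "cnj (p + pp + \<sigma>*q*qq) = cnj s" using R by simp
    then have "q + qq + (1/a)*(1/b)*(1/c)*p*pp = 1/a + 1/b + 1/c"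
      unfolding \<sigma>_def s_def q_def qq_def by (simp only: complex_cnj_mult complex_cnj_add complex_cnj_cnj ca)
    then have "\<sigma> * (q + qq + (1/a)*(1/b)*(1/c)*p*pp) = \<sigma> * (1/a + 1/b + 1/c)" by simp
    moreover have "\<sigma> * (q + qq + (1/a)*(1/b)*(1/c)*p*pp) = \<sigma>*q + \<sigma>*qq + p*pp"
      unfolding \<sigma>_def using nz0 by (simp add: field_simps)
    moreover have "\<sigma> * (1/a + 1/b + 1/c) = e" unfolding \<sigma>_def e_def using nz0 by (simp add: field_simps)
    ultimately show ?thesis by simp
  qed
  define k where "k = pp - p"
  have k0: "k \<noteq> 0" using ppp unfolding k_def by simp
  have qqk: "qq - q = cnj k" unfolding k_def qq_def q_def by simp
  have s0: "\<sigma> \<noteq> 0" unfolding \<sigma>_def using nz0 by simp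
  have cs: "cnj \<sigma> = 1 / \<sigma>" unfolding \<sigma>_def by (simp add: ca)
  define \<alpha>K where "\<alpha>K = \<i> * k * cnj \<sigma>"
  define \<beta>K where "\<beta>K = Re (- \<i> * cnj k * p)"
  define \<gamma>K where "\<gamma>K = \<i> * cnj k - \<i> * k * cnj e"
  define \<delta>K where "\<delta>K = Re (- \<i> * cnj k * (s - p))"
  define E where "E t = s - t - e * cnj t + \<sigma> * (cnj t)^2 - p + p * t * cnj t" for t
  have FKt: "Fc \<alpha>K \<beta>K \<gamma>K \<delta>K t = Re (- \<i> * cnj k * E t)" for t
    unfolding \<alpha>K_def \<beta>K_def \<gamma>K_def \<delta>K_def E_def by (rule FK)
  have EA: "E a = 0" "E b = 0" "E c = 0"
    unfolding E_def ca s_def e_def \<sigma>_def using nz0 by (simp_all add: field_simps power2_eq_square)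
  have Rz0: "s - p - pp - \<sigma>*q*qq = 0" using R by (simp add: algebra_simps)
  have Rb0: "\<sigma>*q + \<sigma>*qq + p*pp - e = 0" using Rb by (simp add: algebra_simps)
  have Ep: "E p = (1 - p*q) * k"
  proof -
    have "E p - (1 - p*q) * k = (s - p - pp - \<sigma>*q*qq) + q*(\<sigma>*q + \<sigma>*qq + p*pp - e)"
      unfolding E_def k_def q_def by (simp add: algebra_simps power2_eq_square)
    then show ?thesis unfolding Rz0 Rb0 by simp
  qed
  have Epp: "E pp = 0"
  proof -
    have "E pp = (s - p - pp - \<sigma>*q*qq) + qq*(\<sigma>*q + \<sigma>*qq + p*pp - e)"
      unfolding E_def qq_def by (simp add: algebra_simps power2_eq_square)
    then show ?thesis unfolding Rz0 Rb0 by simp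
  qed
  have FKz: "Fc \<alpha>K \<beta>K \<gamma>K \<delta>K a = 0" "Fc \<alpha>K \<beta>K \<gamma>K \<delta>K b = 0" "Fc \<alpha>K \<beta>K \<gamma>K \<delta>K c = 0"
    "Fc \<alpha>K \<beta>K \<gamma>K \<delta>K pp = 0" unfolding FKt EA Epp by simp_all
  have FKp: "Fc \<alpha>K \<beta>K \<gamma>K \<delta>K p = 0"
  proof -
    have "- \<i> * cnj k * E p = - \<i> * (k * cnj k) * (1 - p * cnj p)" unfolding Ep q_def by (simp add: algebra_simps)
    also have "\<dots> = - \<i> * complex_of_real ((cmod k)^2 * (1 - (cmod p)^2))" by (simp only: cmod_sq_c of_real_mult of_real_diff of_real_1 mult.assoc)
    finally have eq: "- \<i> * cnj k * E p = - \<i> * complex_of_real ((cmod k)^2 * (1 - (cmod p)^2))" .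
    show ?thesis unfolding FKt eq by simp
  qed
  have nzf: "nz z = (- c0 / complex_of_real R) + (1 / complex_of_real R) * z" for z unfolding nz_def by (simp add: diff_divide_distrib)
  define K0 where "K0 = {z. Fc \<alpha>K \<beta>K \<gamma>K \<delta>K (nz z) = 0}"
  have "is_conic K0"
  proof -
    have "K0 = {z. Fc (\<alpha>K * (1 / complex_of_real R)^2) (\<beta>K * (cmod (1 / complex_of_real R))^2)
      (2 * \<alpha>K * (- c0 / complex_of_real R) * (1 / complex_of_real R) + 2 * complex_of_real \<beta>K * cnj (- c0 / complex_of_real R) * (1 / complex_of_real R) + \<gamma>K * (1 / complex_of_real R))
      (Fc \<alpha>K \<beta>K \<gamma>K \<delta>K (- c0 / complex_of_real R)) z = 0}"
      unfolding K0_def nzf Fc_affine ..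
    moreover have "\<alpha>K * (1 / complex_of_real R)^2 \<noteq> 0" unfolding \<alpha>K_def using k0 s0 Rc0 by simp
    ultimately show ?thesis unfolding conic_Fc by blast
  qed
  moreover have "{A, B, C, P, P'} \<subseteq> K0" unfolding K0_def using FKz FKp
    unfolding a_def b_def c_def p_def pp_def by auto
  ultimately have "K0 = K" using K(3) by blast
  then have FKd: "Fc \<alpha>K \<beta>K \<gamma>K \<delta>K d = 0" using D(2) unfolding K0_def d_def by auto
  have vK: "cnj \<alpha>K = \<alpha>K * (a*b*c*d)"
    by (rule vieta_unit(1)[OF ua(1-4) dabc(1,2) dd(1)[symmetric] dabc(3) dd(2)[symmetric] dd(3)[symmetric] FKz(1-3) FKd])
  have Kd: "d*(pp - p) = - \<sigma>*(qq - q)"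
  proof -
    have c1: "cnj \<alpha>K = - \<i> * cnj k * \<sigma>" unfolding \<alpha>K_def by simp
    have c2: "\<alpha>K * (a*b*c*d) = \<i> * k * d"
    proof -
      have "\<alpha>K * (a*b*c*d) = \<i> * k * ((1/\<sigma>) * (a*b*c)) * d" unfolding \<alpha>K_def cs by (simp only: mult_ac)
      also have "(1/\<sigma>) * (a*b*c) = 1" unfolding \<sigma>_def using nz0 by simp
      finally show ?thesis by simp
    qed
    have eq: "- \<i> * cnj k * \<sigma> = \<i> * k * d" using vK unfolding c1 c2 .
    have "\<i> * (d * k + \<sigma> * cnj k) = \<i> * k * d - (- \<i> * cnj k * \<sigma>)" by (simp add: algebra_simps)
    then have "\<i> * (d * k + \<sigma> * cnj k) = 0" unfolding eq by simp
    then have z: "d * k + \<sigma> * cnj k = 0" by (metis mult_eq_0_iff complex_i_not_zero)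
    have "d * k = - (\<sigma> * cnj k)" using z by (simp add: eq_neg_iff_add_eq_0)
    then show ?thesis unfolding qqk k_def[symmetric] by simp
  qed
  have Xr: "x*(d*q - 1) = d - p"
  proof -
    obtain t :: real where xt: "x = d + complex_of_real t * (p - d)"
      using nz_line[OF Xd(2)] unfolding x_def d_def p_def by blast
    have "cnj x = cnj d + complex_of_real t * (cnj p - cnj d)" using xt by simp
    then have cx: "1/x = 1/d + complex_of_real t * (q - 1/d)" unfolding q_def ca .
    show ?thesis by (rule chord_alg[OF nz0(5) nz0(4) xd xt cx])
  qed
  have kr: "d*(x*q - 1) = x - p" "x*(s - 2*p - \<sigma>*q*q) = e - 2*\<sigma>*q - p*p"
    "\<sigma>*(qq - q)*(p*q - 1) = (p - x)*(s - 2*p - \<sigma>*q*q)"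
    using k_rel[OF R Rb Kd Xr] by auto
  obtain \<alpha> \<beta> \<gamma> \<delta> where ab: "\<alpha> \<noteq> 0 \<or> \<beta> \<noteq> 0" and C1eq: "C1 = {z. Fc \<alpha> \<beta> \<gamma> \<delta> z = 0}"
    using C1(1) unfolding conic_Fc by blast
  define \<alpha>1 where "\<alpha>1 = \<alpha> * (complex_of_real R)^2"
  define \<beta>1 where "\<beta>1 = \<beta> * (cmod (complex_of_real R))^2"
  define \<gamma>1 where "\<gamma>1 = 2 * \<alpha> * c0 * complex_of_real R + 2 * complex_of_real \<beta> * cnj c0 * complex_of_real R + \<gamma> * complex_of_real R"
  define \<delta>1 where "\<delta>1 = Fc \<alpha> \<beta> \<gamma> \<delta> c0"
  have F1: "Fc \<alpha> \<beta> \<gamma> \<delta> z = Fc \<alpha>1 \<beta>1 \<gamma>1 \<delta>1 (nz z)" for z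
  proof -
    have "Fc \<alpha> \<beta> \<gamma> \<delta> (c0 + complex_of_real R * nz z) = Fc \<alpha>1 \<beta>1 \<gamma>1 \<delta>1 (nz z)"
      unfolding \<alpha>1_def \<beta>1_def \<gamma>1_def \<delta>1_def by (rule Fc_affine)
    then show ?thesis using nz_inv[of z] by simp
  qed
  have ab1: "\<alpha>1 \<noteq> 0 \<or> \<beta>1 \<noteq> 0" using ab R0 unfolding \<alpha>1_def \<beta>1_def by auto
  have F1z: "Fc \<alpha>1 \<beta>1 \<gamma>1 \<delta>1 a = 0" "Fc \<alpha>1 \<beta>1 \<gamma>1 \<delta>1 b = 0" "Fc \<alpha>1 \<beta>1 \<gamma>1 \<delta>1 c = 0"
    "Fc \<alpha>1 \<beta>1 \<gamma>1 \<delta>1 p = 0" "Fc \<alpha>1 \<beta>1 \<gamma>1 \<delta>1 x = 0"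
    "Fc \<alpha>1 \<beta>1 \<gamma>1 \<delta>1 x1 = 0" "Fc \<alpha>1 \<beta>1 \<gamma>1 \<delta>1 x2 = 0"
    using C1(2) X12(1,2) unfolding C1eq a_def b_def c_def p_def x_def x1_def x2_def F1 by auto
  note vv = vieta_unit[OF ua(1-3) ua(5) dabc(1,2) dx(1)[symmetric] dabc(3) dx(2)[symmetric] dx(3)[symmetric] F1z(1-3) F1z(5)]
  have v1: "cnj \<alpha>1 = \<alpha>1 * (\<sigma> * x)" using vv(1) unfolding \<sigma>_def by (simp add: mult_ac)
  have v2: "\<gamma>1 = - \<alpha>1 * (s + x)" using vv(2) unfolding s_def by (simp add: algebra_simps)
  have v3: "2 * complex_of_real \<delta>1 = \<alpha>1 * (e + s*x) - 2 * complex_of_real \<beta>1"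
    using vv(3) unfolding s_def e_def by (simp add: algebra_simps)
  have v4: "cnj \<gamma>1 = - \<alpha>1 * (\<sigma> + e*x)" using vv(4) unfolding \<sigma>_def e_def by (simp add: algebra_simps)
  have a10: "\<alpha>1 \<noteq> 0"
  proof
    assume h: "\<alpha>1 = 0"
    then have g0: "\<gamma>1 = 0" using v2 by simp
    have bd: "complex_of_real \<delta>1 = - complex_of_real \<beta>1" using v3 h by simp
    then have bd': "\<delta>1 = - \<beta>1" by (metis of_real_eq_iff of_real_minus)
    have "Fc \<alpha>1 \<beta>1 \<gamma>1 \<delta>1 p = \<beta>1 * ((cmod p)^2 - 1)" unfolding Fc_def h g0 bd' by (simp add: algebra_simps)
    then have "\<beta>1 * ((cmod p)^2 - 1) = 0" using F1z(4) by simp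
    moreover have "(cmod p)^2 \<noteq> 1" using up norm_ge_zero[of p] unfolding power2_eq_1_iff by linarith
    ultimately have "\<beta>1 = 0" by simp
    then show False using ab1 h by simp
  qed
  define B where "B = 2 * complex_of_real \<beta>1 / \<alpha>1"
  define W where "W = p*q - 1"
  define \<Phi> where "\<Phi> = p*p - (s + x)*p + (e + s*x) - (\<sigma> + e*x)*q + \<sigma>*x*q*q"
  have BW: "B * W = - \<Phi>"
  proof -
    have "complex_of_real (Fc \<alpha>1 \<beta>1 \<gamma>1 \<delta>1 p) = 0" using F1z(4) by simp
    then have P0: "\<alpha>1 * p^2 + cnj \<alpha>1 * q^2 + 2 * complex_of_real \<beta>1 * p * q + \<gamma>1 * p + cnj \<gamma>1 * q + 2 * complex_of_real \<delta>1 = 0"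
      unfolding Fc_c q_def by simp
    have "\<alpha>1 * p^2 + cnj \<alpha>1 * q^2 + 2 * complex_of_real \<beta>1 * p * q + \<gamma>1 * p + cnj \<gamma>1 * q + 2 * complex_of_real \<delta>1
       = \<alpha>1 * \<Phi> + 2 * complex_of_real \<beta>1 * W"
      unfolding v4 unfolding v1 v2 v3 \<Phi>_def W_def by (simp add: algebra_simps power2_eq_square)
    then have "\<alpha>1 * \<Phi> + 2 * complex_of_real \<beta>1 * W = 0" using P0 by simp
    then show ?thesis unfolding B_def using a10 by (simp add: field_simps eq_neg_iff_add_eq_0)
  qed
  obtain \<Gamma>' where G': "is_circle \<Gamma>'" "{P, X, X1, X2} \<subseteq> \<Gamma>'" using X12(6) unfolding concyclic_def by blast
  obtain c2 and r2 :: real where r20: "r2 > 0" and G'eq: "\<Gamma>' = {z. cmod (z - c2) = r2}"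
    using G'(1) unfolding is_circle_def by blast
  define \<tau> where "\<tau> z = (z - c2) / complex_of_real r2" for z
  have r2c: "complex_of_real r2 \<noteq> 0" using r20 by simp
  have \<tau>_inv: "z = c2 + complex_of_real r2 * \<tau> z" for z unfolding \<tau>_def using r2c by simp
  have \<tau>u: "cmod (\<tau> P) = 1" "cmod (\<tau> X) = 1" "cmod (\<tau> X1) = 1" "cmod (\<tau> X2) = 1"
    using G'(2) r20 unfolding G'eq \<tau>_def by (auto simp: norm_divide)
  have \<tau>eq: "\<tau> z = \<tau> w \<longleftrightarrow> z = w" for z w unfolding \<tau>_def using r2c by (auto simp: divide_cancel_right)
  have PX: "P \<noteq> X" using Ppos(4) Xd(1) by auto
  have \<tau>d: "\<tau> P \<noteq> \<tau> X" "\<tau> P \<noteq> \<tau> X1" "\<tau> P \<noteq> \<tau> X2" "\<tau> X \<noteq> \<tau> X1" "\<tau> X \<noteq> \<tau> X2" "\<tau> X1 \<noteq> \<tau> X2"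
    unfolding \<tau>eq using PX X12(3-5) by auto
  define \<alpha>2 where "\<alpha>2 = \<alpha> * (complex_of_real r2)^2"
  define \<beta>2 where "\<beta>2 = \<beta> * (cmod (complex_of_real r2))^2"
  define \<gamma>2 where "\<gamma>2 = 2 * \<alpha> * c2 * complex_of_real r2 + 2 * complex_of_real \<beta> * cnj c2 * complex_of_real r2 + \<gamma> * complex_of_real r2"
  define \<delta>2 where "\<delta>2 = Fc \<alpha> \<beta> \<gamma> \<delta> c2"
  have F2: "Fc \<alpha> \<beta> \<gamma> \<delta> z = Fc \<alpha>2 \<beta>2 \<gamma>2 \<delta>2 (\<tau> z)" for z
  proof -
    have "Fc \<alpha> \<beta> \<gamma> \<delta> (c2 + complex_of_real r2 * \<tau> z) = Fc \<alpha>2 \<beta>2 \<gamma>2 \<delta>2 (\<tau> z)"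
      unfolding \<alpha>2_def \<beta>2_def \<gamma>2_def \<delta>2_def by (rule Fc_affine)
    then show ?thesis using \<tau>_inv[of z] by simp
  qed
  have F2z: "Fc \<alpha>2 \<beta>2 \<gamma>2 \<delta>2 (\<tau> P) = 0" "Fc \<alpha>2 \<beta>2 \<gamma>2 \<delta>2 (\<tau> X) = 0"
    "Fc \<alpha>2 \<beta>2 \<gamma>2 \<delta>2 (\<tau> X1) = 0" "Fc \<alpha>2 \<beta>2 \<gamma>2 \<delta>2 (\<tau> X2) = 0"
    using C1(2) X12(1,2) unfolding C1eq F2[symmetric] by auto
  have vG: "cnj \<alpha>2 = \<alpha>2 * (\<tau> P * \<tau> X * \<tau> X1 * \<tau> X2)"
    by (rule vieta_unit(1)[OF \<tau>u \<tau>d F2z])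
  have a0: "\<alpha> \<noteq> 0" using a10 unfolding \<alpha>1_def by simp
  have ca1: "cnj \<alpha> = \<alpha> * (\<sigma> * x)"
  proof -
    have "cnj \<alpha> * (complex_of_real R)^2 = (\<alpha> * (\<sigma> * x)) * (complex_of_real R)^2"
      using v1 unfolding \<alpha>1_def by (simp add: mult_ac)
    then show ?thesis using Rc0 by simp
  qed
  have ca2: "cnj \<alpha> = \<alpha> * (\<tau> P * \<tau> X * \<tau> X1 * \<tau> X2)"
  proof -
    have "cnj \<alpha> * (complex_of_real r2)^2 = (\<alpha> * (\<tau> P * \<tau> X * \<tau> X1 * \<tau> X2)) * (complex_of_real r2)^2"
      using vG unfolding \<alpha>2_def by (simp add: mult_ac)
    then show ?thesis using r2c by simp
  qed
  have prod4: "\<tau> P * \<tau> X * \<tau> X1 * \<tau> X2 = \<sigma> * x" using ca1 ca2 a0 by simp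
  have difX: "X - P = complex_of_real R * (x - p)" unfolding x_def p_def by (rule nz_diff)
  have difX2: "X - P = complex_of_real r2 * (\<tau> X - \<tau> P)" unfolding \<tau>_def using r2c by (simp add: field_simps)
  have chx: "x - p = - (x * d) * cnj (x - p)"
  proof -
    have cxp: "cnj (x - p) = 1/x - q" unfolding q_def using ca(5) by simp
    have "- (x * d) * cnj (x - p) = - (x * d) * (1/x - q)" unfolding cxp ..
    also have "\<dots> = d * (x*q - 1)" using nz0 by (simp add: field_simps)
    finally show ?thesis using kr(1) by simp
  qed
  have chX: "X - P = - (x * d) * cnj (X - P)"
  proof -
    have cX: "cnj (X - P) = complex_of_real R * cnj (x - p)" unfolding difX by simp
    have "- (x * d) * cnj (X - P) = complex_of_real R * (- (x * d) * cnj (x - p))" unfolding cX by (simp only: mult_ac)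
    also have "\<dots> = complex_of_real R * (x - p)" unfolding chx[symmetric] ..
    finally show ?thesis unfolding difX by simp
  qed
  have chX2: "X - P = - (\<tau> X * \<tau> P) * cnj (X - P)"
    by (rule chord_scaled[OF \<tau>u(2) \<tau>u(1) difX2])
  have cXP: "cnj (X - P) \<noteq> 0" using PX by simp
  have tPX: "\<tau> X * \<tau> P = x * d" using chX chX2 cXP by (metis mult_cancel_right neg_equal_iff_equal)
  have t12: "\<tau> X1 * \<tau> X2 = \<sigma> / d"
  proof -
    have "(x * d) * (\<tau> X1 * \<tau> X2) = (\<tau> X * \<tau> P) * (\<tau> X1 * \<tau> X2)" unfolding tPX ..
    also have "\<dots> = \<tau> P * \<tau> X * \<tau> X1 * \<tau> X2" by (simp only: mult_ac)
    also have "\<dots> = \<sigma> * x" by (rule prod4)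
    finally have h: "(x * d) * (\<tau> X1 * \<tau> X2) = \<sigma> * x" .
    have "\<tau> X1 * \<tau> X2 = ((x * d) * (\<tau> X1 * \<tau> X2)) / (x * d)" using nz0 by simp
    also have "\<dots> = (\<sigma> * x) / (x * d)" unfolding h ..
    also have "\<dots> = \<sigma> / d" using nz0 by simp
    finally show ?thesis .
  qed
  define \<kappa> where "\<kappa> = - \<sigma> / d"
  have par12: "X1 - X2 = \<kappa> * cnj (X1 - X2)"
  proof -
    have "X1 - X2 = complex_of_real r2 * (\<tau> X1 - \<tau> X2)" unfolding \<tau>_def using r2c by (simp add: field_simps)
    note h = chord_scaled[OF \<tau>u(3) \<tau>u(4) this, unfolded t12]
    show ?thesis unfolding \<kappa>_def minus_divide_left[symmetric] by (rule h)
  qed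
  have kk: "k = \<kappa> * cnj k" using Kd nz0 unfolding \<kappa>_def qqk k_def[symmetric] by (simp add: field_simps)
  have partA: "parallel_lines (line X1 X2) (line P Z)"
  proof (rule parallel_dir[OF X12(3) Zd(3)[symmetric]])
    obtain t :: real where zt: "Z = P + complex_of_real t * (P' - P)" using Zd(2) unfolding line_iff by blast
    have zp: "Z - P = complex_of_real (t * R) * k" unfolding zt k_def pp_def p_def using nz_diff[of P' P] by simp
    define w where "w = (X2 - X1) * cnj k"
    have "cnj w = cnj (X2 - X1) * k" unfolding w_def by simp
    also have "\<dots> = w" unfolding w_def using par12 kk
      by (metis (no_types, lifting) complex_cnj_cnj complex_cnj_diff complex_cnj_mult minus_diff_eq mult.assoc mult.commute mult_minus_right)
    finally have "Im w = 0" by (rule cnj_self_Im)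
    then show "Im ((X2 - X1) * cnj (Z - P)) = 0" unfolding zp w_def by simp
  qed
  have partB: "\<forall>X1' X2'. X1' \<in> \<Omega> \<and> X1' \<in> line X X1 \<and> X1' \<noteq> X \<and>
               X2' \<in> \<Omega> \<and> X2' \<in> line X X2 \<and> X2' \<noteq> X \<longrightarrow> collinear {P', X1', X2'}"
  proof (intro allI impI)
    fix X1' X2'
    assume H: "X1' \<in> \<Omega> \<and> X1' \<in> line X X1 \<and> X1' \<noteq> X \<and> X2' \<in> \<Omega> \<and> X2' \<in> line X X2 \<and> X2' \<noteq> X"
    show "collinear {P', X1', X2'}"
    proof (cases "X1' = X2'")
      case True
      then show ?thesis by (simp add: collinear_2)
    next
      case False
      define u where "u = nz X1'"
      define v where "v = nz X2'"
      have uu: "cmod u = 1" "cmod v = 1" unfolding u_def v_def using H nz_unit by auto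
      have cu: "cnj u = 1/u" "cnj v = 1/v" using unit_cnj uu by auto
      have u0: "u \<noteq> 0" "v \<noteq> 0" using uu by auto
      have ux: "u \<noteq> x" "v \<noteq> x" "u \<noteq> v" unfolding u_def v_def x_def nz_eq using H False by auto
      obtain t1 :: real where t1: "u = x + complex_of_real t1 * (x1 - x)"
        using nz_line[of X1' X X1] H unfolding u_def x_def x1_def by blast
      obtain t2 :: real where t2: "v = x + complex_of_real t2 * (x2 - x)"
        using nz_line[of X2' X X2] H unfolding v_def x_def x2_def by blast
      have t10: "t1 \<noteq> 0" "t2 \<noteq> 0" using t1 t2 ux by auto
      define s1 where "s1 = 1 / t1"
      define s2 where "s2 = 1 / t2"
      define e1 where "e1 = u - x"
      define e2 where "e2 = v - x"
      have x1e: "x1 = x + e1 * complex_of_real s1" using t1 t10 unfolding e1_def s1_def by (simp add: field_simps)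
      have x2e: "x2 = x + e2 * complex_of_real s2" using t2 t10 unfolding e2_def s2_def by (simp add: field_simps)
      have s10: "s1 \<noteq> 0" "s2 \<noteq> 0" using t10 unfolding s1_def s2_def by auto
      have e10: "e1 \<noteq> 0" "e2 \<noteq> 0" using ux unfolding e1_def e2_def by auto
      define w1 where "w1 = - (x * u)"
      define w2 where "w2 = - (x * v)"
      have w10: "w1 \<noteq> 0" "w2 \<noteq> 0" using nz0 u0 unfolding w1_def w2_def by auto
      have ce1: "cnj e1 = e1 / w1" unfolding e1_def w1_def using cu ca nz0 u0 by (simp add: field_simps)
      have ce2: "cnj e2 = e2 / w2" unfolding e2_def w2_def using cu ca nz0 u0 by (simp add: field_simps)
      define h where "h = 2*\<alpha>1*x + 2*complex_of_real \<beta>1*cnj x + \<gamma>1"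
      define L1 where "L1 = Re (h * e1)"
      define L2 where "L2 = Re (h * e2)"
      define Q1 where "Q1 = Re (\<alpha>1 * e1^2) + \<beta>1 * (cmod e1)^2"
      define Q2 where "Q2 = Re (\<alpha>1 * e2^2) + \<beta>1 * (cmod e2)^2"
      have exp1: "Fc \<alpha>1 \<beta>1 \<gamma>1 \<delta>1 (x + e1 * complex_of_real s) = s * L1 + s^2 * Q1" for s
        using Fc_expand[of \<alpha>1 \<beta>1 \<gamma>1 \<delta>1 x e1 s] F1z(5) unfolding L1_def Q1_def h_def by simp
      have exp2: "Fc \<alpha>1 \<beta>1 \<gamma>1 \<delta>1 (x + e2 * complex_of_real s) = s * L2 + s^2 * Q2" for s
        using Fc_expand[of \<alpha>1 \<beta>1 \<gamma>1 \<delta>1 x e2 s] F1z(5) unfolding L2_def Q2_def h_def by simp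
      have LQ1: "L1 + s1 * Q1 = 0"
      proof -
        have "s1 * (L1 + s1 * Q1) = 0" using exp1[of s1] F1z(6) unfolding x1e by (simp add: algebra_simps power2_eq_square)
        then show ?thesis using s10 by simp
      qed
      have LQ2: "L2 + s2 * Q2 = 0"
      proof -
        have "s2 * (L2 + s2 * Q2) = 0" using exp2[of s2] F1z(7) unfolding x2e by (simp add: algebra_simps power2_eq_square)
        then show ?thesis using s10 by simp
      qed
      define N1 where "N1 = h * w1 + cnj h"
      define N2 where "N2 = h * w2 + cnj h"
      define M1 where "M1 = \<alpha>1 * w1^2 + 2*complex_of_real \<beta>1 * w1 + cnj \<alpha>1"
      define M2 where "M2 = \<alpha>1 * w2^2 + 2*complex_of_real \<beta>1 * w2 + cnj \<alpha>1"
      have LL1: "complex_of_real L1 = e1 * N1 / (2 * w1)" unfolding L1_def Lc ce1 N1_def using w10 by (simp add: field_simps)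
      have LL2: "complex_of_real L2 = e2 * N2 / (2 * w2)" unfolding L2_def Lc ce2 N2_def using w10 by (simp add: field_simps)
      have QQ1: "complex_of_real Q1 = e1^2 * M1 / (2 * w1^2)" unfolding Q1_def Qc ce1 M1_def using w10
        by (simp add: field_simps power2_eq_square)
      have QQ2: "complex_of_real Q2 = e2^2 * M2 / (2 * w2^2)" unfolding Q2_def Qc ce2 M2_def using w10
        by (simp add: field_simps power2_eq_square)
      have SQ1: "complex_of_real s1 * complex_of_real Q1 = - complex_of_real L1"
      proof -
        have "s1 * Q1 = - L1" using LQ1 by linarith
        then have "complex_of_real (s1 * Q1) = complex_of_real (- L1)" by simp
        then show ?thesis by (simp only: of_real_mult of_real_minus)
      qed
      have SQ2: "complex_of_real s2 * complex_of_real Q2 = - complex_of_real L2"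
      proof -
        have "s2 * Q2 = - L2" using LQ2 by linarith
        then have "complex_of_real (s2 * Q2) = complex_of_real (- L2)" by simp
        then show ?thesis by (simp only: of_real_mult of_real_minus)
      qed
      have parn: "x1 - x2 = \<kappa> * cnj (x1 - x2)"
      proof -
        have "X1 - X2 = complex_of_real R * (x1 - x2)" unfolding x1_def x2_def by (rule nz_diff)
        then have "complex_of_real R * (x1 - x2) = \<kappa> * (complex_of_real R * cnj (x1 - x2))" using par12 by simp
        then have "complex_of_real R * (x1 - x2) = complex_of_real R * (\<kappa> * cnj (x1 - x2))" by (simp only: mult.left_commute)
        then show ?thesis using mult_left_cancel[OF Rc0] by blast
      qed
      have par: "complex_of_real s1 * e1 - complex_of_real s2 * e2
          = \<kappa> * (complex_of_real s1 * e1 / w1 - complex_of_real s2 * e2 / w2)"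
      proof -
        have d12: "x1 - x2 = complex_of_real s1 * e1 - complex_of_real s2 * e2" unfolding x1e x2e by (simp add: mult.commute)
        have "cnj (x1 - x2) = complex_of_real s1 * cnj e1 - complex_of_real s2 * cnj e2" unfolding d12 by simp
        then show ?thesis using parn unfolding d12 ce1 ce2 by (simp add: mult.assoc)
      qed
      have bz: "N1 * M2 * (w1 - \<kappa>) = N2 * M1 * (w2 - \<kappa>)"
        by (rule bez_alg[OF e10 w10 LL1 LL2 QQ1 QQ2 SQ1 SQ2 par])
      define B2 where "B2 = h*(2*complex_of_real \<beta>1) - (cnj h - \<kappa>*h)*\<alpha>1"
      define B1 where "B1 = h*cnj \<alpha>1 + \<kappa>*cnj h*\<alpha>1"
      define B0 where "B0 = (cnj h - \<kappa>*h)*cnj \<alpha>1 + \<kappa>*cnj h*(2*complex_of_real \<beta>1)"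
      have Bz: "B2*w1*w2 + B1*(w1 + w2) + B0 = 0"
      proof -
        have "(w1 - w2) * (B2*w1*w2 + B1*(w1 + w2) + B0) = 0"
          using bezout[of w1 \<kappa> h "cnj h" \<alpha>1 w2 "2*complex_of_real \<beta>1" "cnj \<alpha>1"] bz
          unfolding B2_def B1_def B0_def N1_def N2_def M1_def M2_def by (simp add: mult_ac)
        moreover have "w1 \<noteq> w2" unfolding w1_def w2_def using ux nz0 by simp
        ultimately show ?thesis by simp
      qed
      define V where "V = s - 2*p - \<sigma>*q*q"
      have W0: "W \<noteq> 0"
      proof
        assume "W = 0"
        then have "p * cnj p = 1" unfolding W_def q_def by simp
        then have "complex_of_real ((cmod p)^2) = 1" by (simp only: cmod_sq_c)
        then have "(cmod p)^2 = 1" by (metis of_real_eq_1_iff)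
        then show False using up norm_ge_zero[of p] unfolding power2_eq_1_iff by linarith
      qed
      have st: "(x*x - s*x + B)*(B + \<kappa> - \<sigma>*qq) = (\<sigma> - e*x + B*x)*(x + \<kappa>*qq)"
      proof (rule star[of s V p \<sigma> q e x B \<kappa> qq])
        show "s = V + 2*p + \<sigma>*q*q" unfolding V_def by simp
        show "e = x*V + 2*\<sigma>*q + p*p" using kr(2) unfolding V_def by (simp add: algebra_simps)
        show "B * (p*q - 1) = - (p*p - (s + x)*p + (e + s*x) - (\<sigma> + e*x)*q + \<sigma>*x*q*q)" using BW unfolding W_def \<Phi>_def .
        show "\<kappa>*(p - x) = \<sigma>*(x*q - 1)"
        proof -
          have "\<kappa>*(p - x) = (\<sigma>/d) * (x - p)" using nz0(4) unfolding \<kappa>_def by (simp add: field_simps)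
          also have "\<dots> = (\<sigma>/d) * (d*(x*q - 1))" using kr(1) by simp
          also have "\<dots> = \<sigma>*(x*q - 1)" using nz0 by simp
          finally show ?thesis .
        qed
        show "\<sigma>*qq*(p*q - 1) = \<sigma>*q*(p*q - 1) + (p - x)*V" using kr(3) unfolding V_def by (simp add: algebra_simps)
        show "p*q - 1 \<noteq> 0" using W0 unfolding W_def .
        show "p \<noteq> x" using pd(2) .
      qed
      have keyB: "B2 * x = B1 * qq" unfolding B2_def B1_def
      proof (rule key_id[OF _ _ _ _ nz0(5) st])
        show "cnj \<alpha>1 = \<alpha>1*\<sigma>*x" using v1 by (simp add: mult.assoc)
        show "2*complex_of_real \<beta>1 = \<alpha>1*B" unfolding B_def using a10 by simp
        show "h = \<alpha>1*(x - s + B/x)" unfolding h_def B_def v2 ca using a10 nz0 by (simp add: field_simps)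
        show "cnj h = \<alpha>1*(\<sigma> - e*x + B*x)"
        proof -
          have "cnj h = 2*cnj \<alpha>1*(1/x) + 2*complex_of_real \<beta>1*x + cnj \<gamma>1"
            unfolding h_def by (simp add: ca)
          also have "\<dots> = \<alpha>1*(\<sigma> - e*x + B*x)" unfolding v1 v4 B_def using a10 nz0 by (simp add: field_simps)
          finally show ?thesis .
        qed
      qed
      have k1: "cnj \<kappa> = 1 / \<kappa>" "\<kappa> \<noteq> 0"
      proof -
        have "cnj \<kappa> = - cnj \<sigma> / cnj d" unfolding \<kappa>_def by simp
        also have "\<dots> = - (1/\<sigma>) / (1/d)" unfolding cs ca(4) ..
        also have "\<dots> = 1 / \<kappa>" unfolding \<kappa>_def using s0 nz0 by (simp add: field_simps)
        finally show "cnj \<kappa> = 1 / \<kappa>" .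
        show "\<kappa> \<noteq> 0" unfolding \<kappa>_def using s0 nz0 by simp
      qed
      have keyB0: "B0 = x * B1 * pp" unfolding B0_def B1_def
        by (rule B0_rel[OF k1 ca(5) nz0(5) _ keyB[unfolded B2_def B1_def]]) (simp add: qq_def)
      have Bz2: "x * B1 * (qq*u * v - (u + v) + pp) = 0"
      proof -
        have "x * B1 * (qq*u * v - (u + v) + pp) = (B2 * x) * x * u * v - B1 * x * (u + v) + B0"
          unfolding keyB keyB0 by (simp add: algebra_simps)
        also have "\<dots> = B2*w1*w2 + B1*(w1 + w2) + B0" unfolding w1_def w2_def by (simp add: algebra_simps)
        finally show ?thesis using Bz by simp
      qed
      have B10: "B1 \<noteq> 0"
      proof
        assume B1z: "B1 = 0"
        have B2z: "B2 = 0" using keyB B1z nz0(5) by simp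
        have hM: "h * (\<alpha>1*\<kappa>^2 + (2*complex_of_real \<beta>1)*\<kappa> + cnj \<alpha>1) = 0"
          using hM_zero[of h "cnj \<alpha>1" \<kappa> "cnj h" \<alpha>1 "2*complex_of_real \<beta>1"] B1z B2z unfolding B1_def B2_def by blast
        have c0u: "cmod (a - 0) = 1" "cmod (b - 0) = 1" "cmod (c - 0) = 1" "cmod (d - 0) = 1" "cmod (x - 0) = 1"
          using ua by auto
        obtain tx :: real where xt: "x = d + complex_of_real tx * (p - d)"
          using nz_line[OF Xd(2)] unfolding x_def d_def p_def by blast
        have pxd: "collinear {p, x, d}"
        proof -
          have "p = d + (p - d) * complex_of_real 1" by simp
          moreover have "x = d + (p - d) * complex_of_real tx" using xt by (simp add: mult.commute)
          moreover have "d = d + (p - d) * complex_of_real 0" by simp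
          ultimately show ?thesis by (rule on_line_col)
        qed
        have spec: "\<not> collinear {z, p, x}" if "cmod z = 1" "z \<noteq> x" "z \<noteq> d" for z
        proof
          assume "collinear {z, p, x}"
          then have "collinear {p, x, z}" by (simp add: insert_commute)
          then have "collinear {x, z, d}" using col_trans[OF pd(2) _ pxd] by blast
          moreover have "\<not> collinear {x, z, d}"
            using circle_noncol[of x 0 1 z d] that ua(5) ua(4) xd by auto
          ultimately show False by simp
        qed
        have ncP: "\<not> collinear {a, b, p}" "\<not> collinear {b, c, p}" "\<not> collinear {a, c, p}"
        proof -
          show "\<not> collinear {a, b, p}" unfolding a_def b_def p_def nz_col using notline_col[OF dABC(1) Ppos(1)] .
          show "\<not> collinear {b, c, p}" unfolding b_def c_def p_def nz_col using notline_col[OF dABC(3) Ppos(2)] .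
          have "\<not> collinear {c, a, p}" unfolding a_def c_def p_def nz_col using notline_col[OF dABC(2)[symmetric] Ppos(3)] .
          then show "\<not> collinear {a, c, p}" by (simp add: insert_commute)
        qed
        have ncX: "\<not> collinear {a, b, x}" "\<not> collinear {a, c, x}" "\<not> collinear {b, c, x}"
          using circle_noncol[of a 0 1 b x] circle_noncol[of a 0 1 c x] circle_noncol[of b 0 1 c x]
            c0u dabc dx by auto
        have ncS: "\<not> collinear {a, p, x}" "\<not> collinear {b, p, x}" "\<not> collinear {c, p, x}"
          using spec[OF ua(1) dx(1)[symmetric] dd(1)[symmetric]] spec[OF ua(2) dx(2)[symmetric] dd(2)[symmetric]]
            spec[OF ua(3) dx(3)[symmetric] dd(3)[symmetric]] by auto
        have noline: False if "e \<noteq> 0" "\<And>s::real. Fc \<alpha>1 \<beta>1 \<gamma>1 \<delta>1 (Y + e * complex_of_real s) = 0" for Y e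
          by (rule no_line[OF ab1 that F1z(1-5) tri' ncP(1) ncX(1) ncP(3) ncX(2) ncS(1) ncP(2) ncX(3) ncS(2) ncS(3)])
        show False
        proof (cases "h = 0")
          case True
          then have "L1 = 0" unfolding L1_def by simp
          then have "Q1 = 0" using LQ1 s10 by simp
          then have "Fc \<alpha>1 \<beta>1 \<gamma>1 \<delta>1 (x + e1 * complex_of_real s) = 0" for s using exp1[of s] \<open>L1 = 0\<close> by simp
          then show False using noline[OF e10(1)] by blast
        next
          case False
          then have Mk: "\<alpha>1*\<kappa>^2 + (2*complex_of_real \<beta>1)*\<kappa> + cnj \<alpha>1 = 0" using hM by simp
          define ee where "ee = x1 - x2"
          have ee0: "ee \<noteq> 0" unfolding ee_def x1_def x2_def using nz_eq X12(3) by simp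
          have cee: "cnj ee = ee / \<kappa>" using parn k1(2) unfolding ee_def by (simp add: field_simps)
          define h2 where "h2 = 2*\<alpha>1*x2 + 2*complex_of_real \<beta>1*cnj x2 + \<gamma>1"
          have Qe: "Re (\<alpha>1 * ee^2) + \<beta>1 * (cmod ee)^2 = 0"
          proof -
            have "complex_of_real (Re (\<alpha>1 * ee^2) + \<beta>1 * (cmod ee)^2) = ee^2 * (\<alpha>1*\<kappa>^2 + (2*complex_of_real \<beta>1)*\<kappa> + cnj \<alpha>1) / (2 * \<kappa>^2)"
              unfolding Qc cee using k1(2) by (simp add: field_simps power2_eq_square)
            then have "complex_of_real (Re (\<alpha>1 * ee^2) + \<beta>1 * (cmod ee)^2) = 0"
              unfolding Mk by (simp only: mult_zero_right mult_zero_left div_0)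
            then show ?thesis by (simp only: of_real_eq_0_iff)
          qed
          have ex2: "Fc \<alpha>1 \<beta>1 \<gamma>1 \<delta>1 (x2 + ee * complex_of_real s) = s * Re (h2 * ee)" for s
            using Fc_expand[of \<alpha>1 \<beta>1 \<gamma>1 \<delta>1 x2 ee s] F1z(7) Qe unfolding h2_def by simp
          have "x2 + ee * complex_of_real 1 = x1" unfolding ee_def by simp
          then have "Re (h2 * ee) = 0" using ex2[of 1] F1z(6) by simp
          then have "Fc \<alpha>1 \<beta>1 \<gamma>1 \<delta>1 (x2 + ee * complex_of_real s) = 0" for s using ex2[of s] by simp
          then show False using noline[OF ee0] by blast
        qed
      qed
      have rel: "qq*u * v - (u + v) + pp = 0" using Bz2 B10 nz0 by simp
      have "collinear {pp, u, v}"
      proof -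
        define w where "w = (u - pp) * cnj (v - pp)"
        have ppr: "pp = u + v - qq*u * v" using rel by (simp add: algebra_simps)
        have cw: "cnj w = (1/u - qq) * (v - pp)" unfolding w_def qq_def using cu by simp
        have w2: "w = (u - pp) * (1/v - qq)" unfolding w_def qq_def using cu by simp
        have "cnj w = w" unfolding cw unfolding w2 ppr using u0 by (simp add: field_simps)
        then have "Im w = 0" by (rule cnj_self_Im)
        then show ?thesis unfolding collinear_Im w_def .
      qed
      then show ?thesis unfolding pp_def u_def v_def nz_col .
    qed
  qed
  show ?thesis using partA partB by blast
qed


end
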